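(* Let $H$ be a subgroup of a finite group $G$, let $\theta$ be a representation of $G$ and $\chi$ a representation of $H$. Let $\mathrm{Irr}(G\mid\chi)$ denote the set of irreducible representations $\rho$ of $G$ with $\langle\mathrm{Res}^G_H\rho,\chi\rangle\neq0$. Suppose every irreducible $\rho$ with $\langle\rho,\theta\rangle\neq0$ lies in $\mathrm{Irr}(G\mid\chi)$. Then there exists $\rho\in\mathrm{Irr}(G\mid\chi)$ with $\langle\rho,\theta\rangle\geq\dim(\theta)/\dim(\mathrm{Ind}_H^G\chi)$. *)

theory Defs
  imports "HOL-Algebra.Coset" "Jordan_Normal_Form.Matrix"
begin

definition is_rep :: "('a,'b) monoid_scheme \<Rightarrow> nat \<Rightarrow> ('a \<Rightarrow> complex mat) \<Rightarrow> bool" where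
  "is_rep G n \<rho> \<longleftrightarrow>
     (\<forall>g\<in>carrier G. \<rho> g \<in> carrier_mat n n) \<and>
     \<rho> \<one>\<^bsub>G\<^esub> = 1\<^sub>m n \<and>
     (\<forall>g\<in>carrier G. \<forall>h\<in>carrier G. \<rho> (g \<otimes>\<^bsub>G\<^esub> h) = \<rho> g * \<rho> h)"

definition invariant_subspace :: "('a,'b) monoid_scheme \<Rightarrow> nat \<Rightarrow> ('a \<Rightarrow> complex mat) \<Rightarrow> complex vec set \<Rightarrow> bool" where
  "invariant_subspace G n \<rho> W \<longleftrightarrow>
     W \<subseteq> carrier_vec n \<and> 0\<^sub>v n \<in> W \<and>
     (\<forall>v\<in>W. \<forall>w\<in>W. v + w \<in> W) \<and>
     (\<forall>c. \<forall>v\<in>W. c \<cdot>\<^sub>v v \<in> W) \<and>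
     (\<forall>g\<in>carrier G. \<forall>v\<in>W. \<rho> g *\<^sub>v v \<in> W)"

definition is_irrep :: "('a,'b) monoid_scheme \<Rightarrow> nat \<Rightarrow> ('a \<Rightarrow> complex mat) \<Rightarrow> bool" where
  "is_irrep G n \<rho> \<longleftrightarrow> is_rep G n \<rho> \<and> n > 0 \<and>
     (\<forall>W. invariant_subspace G n \<rho> W \<longrightarrow> W = {0\<^sub>v n} \<or> W = carrier_vec n)"

definition mat_trace :: "complex mat \<Rightarrow> complex" where
  "mat_trace A = (\<Sum>i<dim_row A. A $$ (i, i))"

definition rep_inner :: "('a,'b) monoid_scheme \<Rightarrow> ('a \<Rightarrow> complex mat) \<Rightarrow> ('a \<Rightarrow> complex mat) \<Rightarrow> complex" where
  "rep_inner G \<rho> \<theta> =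
     (\<Sum>g\<in>carrier G. mat_trace (\<rho> g) * cnj (mat_trace (\<theta> g))) / of_nat (card (carrier G))"

definition coset_reps :: "('a,'b) monoid_scheme \<Rightarrow> 'a set \<Rightarrow> 'a list" where
  "coset_reps G H = (SOME rs. distinct rs \<and> set rs \<subseteq> carrier G \<and>
      (\<forall>x\<in>carrier G. \<exists>!i. i < length rs \<and> x \<in> (rs ! i) <#\<^bsub>G\<^esub> H))"

text \<open>Induced representation Ind_H^G chi, chi of dimension d, realised as block matrices
  indexed by (coset representative, basis vector of chi).\<close>
definition ind_rep :: "('a,'b) monoid_scheme \<Rightarrow> 'a set \<Rightarrow> nat \<Rightarrow> ('a \<Rightarrow> complex mat) \<Rightarrow> 'a \<Rightarrow> complex mat" where
  "ind_rep G H d \<chi> g =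
     (let rs = coset_reps G H; m = length rs in
      mat (m * d) (m * d) (\<lambda>(i, j).
        let x = inv\<^bsub>G\<^esub> (rs ! (i div d)) \<otimes>\<^bsub>G\<^esub> g \<otimes>\<^bsub>G\<^esub> (rs ! (j div d)) in
        if x \<in> H then \<chi> x $$ (i mod d, j mod d) else 0))"

end

theory Submission
  imports Defs "Jordan_Normal_Form.Spectral_Radius"
begin

lemma trace_comm:
  fixes A B :: "complex mat"
  assumes A: "A \<in> carrier_mat n m" and B: "B \<in> carrier_mat m n"
  shows "mat_trace (A * B) = mat_trace (B * A)"
proof -
  have "mat_trace (A * B) = (\<Sum>i<n. \<Sum>l<m. A $$ (i,l) * B $$ (l,i))"
    using A B by (auto simp: mat_trace_def scalar_prod_def lessThan_atLeast0 intro!: sum.cong)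
  also have "\<dots> = (\<Sum>l<m. \<Sum>i<n. B $$ (l,i) * A $$ (i,l))"
    by (subst sum.swap) (simp add: mult.commute)
  also have "\<dots> = mat_trace (B * A)"
    using A B by (auto simp: mat_trace_def scalar_prod_def lessThan_atLeast0 intro!: sum.cong)
  finally show ?thesis .
qed

lemma trace_one[simp]: "mat_trace (1\<^sub>m k :: complex mat) = of_nat k"
  by (simp add: mat_trace_def)

definition inj_mat :: "complex mat \<Rightarrow> bool" where
  "inj_mat B \<longleftrightarrow> (\<forall>c\<in>carrier_vec (dim_col B). B *\<^sub>v c = 0\<^sub>v (dim_row B) \<longrightarrow> c = 0\<^sub>v (dim_col B))"

lemma mat_eq_by_vec:
  fixes A B :: "complex mat"
  assumes A: "A \<in> carrier_mat n k" and B: "B \<in> carrier_mat n k"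
    and eq: "\<And>v. v \<in> carrier_vec k \<Longrightarrow> A *\<^sub>v v = B *\<^sub>v v"
  shows "A = B"
proof (rule eq_matI)
  fix i j assume i: "i < dim_row B" and j: "j < dim_col B"
  have "(A *\<^sub>v unit_vec k j) $ i = (B *\<^sub>v unit_vec k j) $ i" using eq[of "unit_vec k j"] by simp
  then show "A $$ (i, j) = B $$ (i, j)" using A B i j by simp
qed (use A B in auto)

lemma col_span_factor:
  fixes A B :: "complex mat"
  assumes A: "A \<in> carrier_mat n m" and B: "B \<in> carrier_mat n k"
    and cs: "\<And>j. j < m \<Longrightarrow> \<exists>c\<in>carrier_vec k. col A j = B *\<^sub>v c"
  shows "\<exists>X\<in>carrier_mat k m. A = B * X"
proof -
  define cf where "cf j = (SOME c. c \<in> carrier_vec k \<and> col A j = B *\<^sub>v c)" for j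
  have cf: "cf j \<in> carrier_vec k \<and> col A j = B *\<^sub>v cf j" if "j < m" for j
    using someI_ex[OF cs[OF that, unfolded Bex_def]] unfolding cf_def by blast
  define X where "X = mat k m (\<lambda>(i,j). cf j $ i)"
  have X: "X \<in> carrier_mat k m" unfolding X_def by simp
  have colX: "col X j = cf j" if "j < m" for j
    using cf[OF that] that unfolding X_def by (auto simp: col_def)
  have "A = B * X"
  proof (rule eq_matI)
    fix i j assume i: "i < dim_row (B * X)" and j: "j < dim_col (B * X)"
    then have i': "i < n" and j': "j < m" using B X by auto
    have "(B * X) $$ (i,j) = row B i \<bullet> col X j" using i j by simp
    also have "\<dots> = (B *\<^sub>v cf j) $ i" using colX[OF j'] i' B by simp
    also have "\<dots> = col A j $ i" using cf[OF j'] by simp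
    also have "\<dots> = A $$ (i,j)" using A i' j' by simp
    finally show "A $$ (i, j) = (B * X) $$ (i, j)" by simp
  qed (use A B X in auto)
  with X show ?thesis by blast
qed

lemma wide_not_inj:
  fixes B :: "complex mat"
  assumes B: "B \<in> carrier_mat n k" and nk: "n < k"
  shows "\<exists>v\<in>carrier_vec k. v \<noteq> 0\<^sub>v k \<and> B *\<^sub>v v = 0\<^sub>v n"
proof -
  define B' where "B' = mat k k (\<lambda>(i,j). if i < n then B $$ (i,j) else 0)"
  have B': "B' \<in> carrier_mat k k" unfolding B'_def by simp
  have k1: "k - 1 < k" "\<not> k - 1 < n" using nk by auto
  have "transpose_mat B' *\<^sub>v unit_vec k (k-1) = 0\<^sub>v k"
    by (rule eq_vecI) (use k1 in \<open>auto simp: B'_def\<close>)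
  then have ex: "\<exists>v. v \<in> carrier_vec k \<and> v \<noteq> 0\<^sub>v k \<and> transpose_mat B' *\<^sub>v v = 0\<^sub>v k"
    using k1 by (intro exI[of _ "unit_vec k (k-1)"]) auto
  have "det (transpose_mat B') = 0"
    using det_0_iff_vec_prod_zero[of "transpose_mat B'" k] B' ex by auto
  then have "det B' = 0" using det_transpose[OF B'] by simp
  then obtain v where v: "v \<in> carrier_vec k" "v \<noteq> 0\<^sub>v k" "B' *\<^sub>v v = 0\<^sub>v k"
    using det_0_iff_vec_prod_zero[OF B'] by auto
  have "B *\<^sub>v v = 0\<^sub>v n"
  proof (rule eq_vecI)
    fix i assume "i < dim_vec (0\<^sub>v n :: complex vec)"
    then have i: "i < n" by simp
    have "(B' *\<^sub>v v) $ i = 0" using v(3) i nk by simp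
    moreover have "(B' *\<^sub>v v) $ i = (B *\<^sub>v v) $ i"
      using i nk B v(1) by (auto simp: B'_def scalar_prod_def row_def)
    ultimately show "(B *\<^sub>v v) $ i = 0\<^sub>v n $ i" using i by simp
  qed (use B in simp)
  with v show ?thesis by blast
qed

lemma inj_mat_le:
  assumes B: "B \<in> carrier_mat n k" and inj: "inj_mat B"
  shows "k \<le> n"
proof (rule ccontr)
  assume "\<not> k \<le> n"
  then obtain v where "v\<in>carrier_vec k" "v \<noteq> 0\<^sub>v k" "B *\<^sub>v v = 0\<^sub>v n"
    using wide_not_inj[OF B] by auto
  with inj B show False unfolding inj_mat_def by auto
qed

lemma sq_inj_inverse:
  fixes A :: "complex mat"
  assumes A: "A \<in> carrier_mat n n" and inj: "inj_mat A"
  shows "\<exists>B\<in>carrier_mat n n. A * B = 1\<^sub>m n \<and> B * A = 1\<^sub>m n"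
proof -
  have "det A \<noteq> 0" using det_0_iff_vec_prod_zero[OF A] inj A unfolding inj_mat_def by auto
  from det_non_zero_imp_unit[OF A this, of "()"]
  show ?thesis unfolding Units_def ring_mat_simps by auto
qed

definition cT :: "complex mat \<Rightarrow> complex mat" where
  "cT A = mat (dim_col A) (dim_row A) (\<lambda>(i,j). cnj (A $$ (j,i)))"

lemma cT_carrier[simp]: "A \<in> carrier_mat n k \<Longrightarrow> cT A \<in> carrier_mat k n"
  by (auto simp: cT_def)

lemma sum_cnj_mult_zero:
  fixes w :: "nat \<Rightarrow> complex"
  assumes "(\<Sum>l<n. w l * cnj (w l)) = 0"
  shows "\<forall>l<n. w l = 0"
proof -
  have "(\<Sum>l<n. w l * cnj (w l)) = (\<Sum>l<n. of_real ((cmod (w l))^2))"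
    by (rule sum.cong) (auto simp: complex_norm_square[symmetric] simp del: of_real_power)
  also have "\<dots> = of_real (\<Sum>l<n. (cmod (w l))^2)" by simp
  finally have eq: "(\<Sum>l<n. w l * cnj (w l)) = of_real (\<Sum>l<n. (cmod (w l))^2)" .
  have "(\<Sum>l<n. (cmod (w l))^2) = 0" using eq assms of_real_eq_0_iff by metis
  then have "\<forall>l\<in>{..<n}. (cmod (w l))^2 = 0" by (subst (asm) sum_nonneg_eq_0_iff) auto
  then show ?thesis by auto
qed

lemma gram_inj:
  assumes B: "B \<in> carrier_mat n k" and inj: "inj_mat B"
  shows "inj_mat (cT B * B)"
  unfolding inj_mat_def
proof (intro ballI impI)
  fix c assume c: "c \<in> carrier_vec (dim_col (cT B * B))"
    and z: "(cT B * B) *\<^sub>v c = 0\<^sub>v (dim_row (cT B * B))"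
  have c': "c \<in> carrier_vec k" using c B by (simp add: cT_def)
  define w where "w = B *\<^sub>v c"
  have w: "w \<in> carrier_vec n" using B c' unfolding w_def by simp
  have z': "cT B *\<^sub>v w = 0\<^sub>v k" using z B c' assoc_mult_mat_vec[of "cT B" k n B k c] unfolding w_def
    by (simp add: cT_def)
  have "(\<Sum>i<k. cnj (c $ i) * (cT B *\<^sub>v w) $ i) = 0" using z' by simp
  moreover have "(\<Sum>i<k. cnj (c $ i) * (cT B *\<^sub>v w) $ i)
      = (\<Sum>i<k. \<Sum>l<n. cnj (c $ i) * (cnj (B $$ (l,i)) * w $ l))"
    using B w by (auto simp: cT_def scalar_prod_def lessThan_atLeast0 sum_distrib_left intro!: sum.cong)
  moreover have "\<dots> = (\<Sum>l<n. w $ l * cnj (\<Sum>i<k. B $$ (l,i) * c $ i))"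
    by (subst sum.swap) (auto simp: sum_distrib_left intro!: sum.cong)
  moreover have "\<And>l. l < n \<Longrightarrow> (\<Sum>i<k. B $$ (l,i) * c $ i) = w $ l"
    using B c' unfolding w_def by (auto simp: scalar_prod_def lessThan_atLeast0 intro!: sum.cong)
  ultimately have "(\<Sum>l<n. w $ l * cnj (w $ l)) = 0" by simp
  then have "\<forall>l<n. w $ l = 0" by (rule sum_cnj_mult_zero)
  then have "B *\<^sub>v c = 0\<^sub>v (dim_row B)" using w B unfolding w_def[symmetric] by (auto intro!: eq_vecI)
  then have "c = 0\<^sub>v k" using inj c' B unfolding inj_mat_def by auto
  then show "c = 0\<^sub>v (dim_col (cT B * B))" using B by (simp add: cT_def)
qed

lemma left_inverse:
  assumes B: "B \<in> carrier_mat n k" and inj: "inj_mat B"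
  shows "\<exists>L\<in>carrier_mat k n. L * B = 1\<^sub>m k"
proof -
  have K: "cT B * B \<in> carrier_mat k k" using B by (metis cT_carrier mult_carrier_mat)
  obtain Ki where Ki: "Ki \<in> carrier_mat k k" "Ki * (cT B * B) = 1\<^sub>m k"
    using sq_inj_inverse[OF K gram_inj[OF B inj]] by auto
  have "(Ki * cT B) * B = Ki * (cT B * B)" using Ki B by (simp add: assoc_mult_mat[of _ k k _ n _ k])
  then show ?thesis using Ki B by (intro bexI[of _ "Ki * cT B"]) auto
qed

lemma mv_index:
  fixes B :: "complex mat"
  assumes "B \<in> carrier_mat n k" "c \<in> carrier_vec k" "i < n"
  shows "(B *\<^sub>v c) $ i = (\<Sum>j<k. B $$ (i,j) * c $ j)"
  using assms by (auto simp: scalar_prod_def lessThan_atLeast0 intro!: sum.cong)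

definition subsp :: "nat \<Rightarrow> complex vec set \<Rightarrow> bool" where
  "subsp n W \<longleftrightarrow> W \<subseteq> carrier_vec n \<and> 0\<^sub>v n \<in> W \<and> (\<forall>v\<in>W. \<forall>w\<in>W. v + w \<in> W)
     \<and> (\<forall>c. \<forall>v\<in>W. c \<cdot>\<^sub>v v \<in> W)"

lemma basis_exists:
  assumes W: "subsp n W"
  shows "\<exists>k B. B \<in> carrier_mat n k \<and> inj_mat B \<and> W = (\<lambda>c. B *\<^sub>v c) ` carrier_vec k"
proof -
  define P where "P k \<longleftrightarrow> (\<exists>B\<in>carrier_mat n k. inj_mat B \<and> (\<forall>c\<in>carrier_vec k. B *\<^sub>v c \<in> W))" for k
  have P0: "P 0"
  proof -
    have "inj_mat (0\<^sub>m n 0 :: complex mat)" unfolding inj_mat_def by (auto intro!: eq_vecI)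
    moreover have "(0\<^sub>m n 0 :: complex mat) *\<^sub>v c = 0\<^sub>v n" if "c \<in> carrier_vec 0" for c
      using that by (auto intro!: eq_vecI simp: scalar_prod_def)
    ultimately show ?thesis unfolding P_def using W unfolding subsp_def
      by (intro bexI[of _ "0\<^sub>m n 0"]) auto
  qed
  have bnd: "\<forall>y. P y \<longrightarrow> id y < Suc n"
  proof (intro allI impI)
    fix y assume "P y"
    then obtain B where "B \<in> carrier_mat n y" "inj_mat B" unfolding P_def by auto
    then have "y \<le> n" by (rule inj_mat_le)
    then show "id y < Suc n" by simp
  qed
  obtain k where Pk: "P k" and kmax: "\<And>y. P y \<Longrightarrow> y \<le> k"
    using ex_has_greatest_nat[OF P0 bnd] by auto
  from Pk obtain B where B: "B \<in> carrier_mat n k" and inj: "inj_mat B" and BW: "\<And>c. c\<in>carrier_vec k \<Longrightarrow> B *\<^sub>v c \<in> W"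
    unfolding P_def by auto
  have "W \<subseteq> (\<lambda>c. B *\<^sub>v c) ` carrier_vec k"
  proof
    fix w assume wW: "w \<in> W"
    show "w \<in> (\<lambda>c. B *\<^sub>v c) ` carrier_vec k"
    proof (rule ccontr)
      assume nw: "w \<notin> (\<lambda>c. B *\<^sub>v c) ` carrier_vec k"
      have w: "w \<in> carrier_vec n" using wW W unfolding subsp_def by auto
      define B' where "B' = mat n (Suc k) (\<lambda>(i,j). if j < k then B $$ (i,j) else w $ i)"
      have B': "B' \<in> carrier_mat n (Suc k)" unfolding B'_def by simp
      have dec: "B' *\<^sub>v c = B *\<^sub>v vec k (\<lambda>j. c $ j) + (c $ k) \<cdot>\<^sub>v w" if c: "c \<in> carrier_vec (Suc k)" for c
      proof (rule eq_vecI)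
        fix i assume "i < dim_vec (B *\<^sub>v vec k (\<lambda>j. c $ j) + (c $ k) \<cdot>\<^sub>v w)"
        then have i: "i < n" using w by simp
        have "(B' *\<^sub>v c) $ i = (\<Sum>j<Suc k. B' $$ (i,j) * c $ j)" by (rule mv_index[OF B' c i])
        also have "\<dots> = (\<Sum>j<k. B $$ (i,j) * c $ j) + w $ i * c $ k"
          using i by (simp add: B'_def)
        also have "(\<Sum>j<k. B $$ (i,j) * c $ j) = (B *\<^sub>v vec k (\<lambda>j. c $ j)) $ i"
          using mv_index[OF B _ i, of "vec k (\<lambda>j. c $ j)"] by simp
        finally show "(B' *\<^sub>v c) $ i = (B *\<^sub>v vec k (\<lambda>j. c $ j) + (c $ k) \<cdot>\<^sub>v w) $ i"
          using i w B by (simp add: mult.commute)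
      qed (use B' B w in simp)
      have "P (Suc k)"
        unfolding P_def
      proof (intro bexI[OF _ B'] conjI ballI)
        fix c :: "complex vec" assume c: "c \<in> carrier_vec (Suc k)"
        have "B *\<^sub>v vec k (\<lambda>j. c $ j) \<in> W" by (rule BW) simp
        moreover have "(c $ k) \<cdot>\<^sub>v w \<in> W" using wW W unfolding subsp_def by auto
        ultimately show "B' *\<^sub>v c \<in> W" unfolding dec[OF c] using W unfolding subsp_def by auto
      next
        show "inj_mat B'" unfolding inj_mat_def
        proof (intro ballI impI)
          fix c :: "complex vec" assume c0: "c \<in> carrier_vec (dim_col B')" and z0: "B' *\<^sub>v c = 0\<^sub>v (dim_row B')"
          have c: "c \<in> carrier_vec (Suc k)" using c0 B' by simp
          have z: "B *\<^sub>v vec k (\<lambda>j. c $ j) + (c $ k) \<cdot>\<^sub>v w = 0\<^sub>v n" using z0 dec[OF c] B' by simp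
          have ck: "c $ k = 0"
          proof (rule ccontr)
            assume ck: "c $ k \<noteq> 0"
            have "w = B *\<^sub>v ((- 1 / c $ k) \<cdot>\<^sub>v vec k (\<lambda>j. c $ j))"
            proof (rule eq_vecI)
              fix i assume "i < dim_vec (B *\<^sub>v ((- 1 / c $ k) \<cdot>\<^sub>v vec k (\<lambda>j. c $ j)))"
              then have i: "i < n" using B by simp
              have h1: "(B *\<^sub>v vec k (\<lambda>j. c $ j)) $ i + c $ k * w $ i = 0"
                using arg_cong[OF z, of "\<lambda>v. v $ i"] i w B by simp
              have h2: "(B *\<^sub>v ((- 1 / c $ k) \<cdot>\<^sub>v vec k (\<lambda>j. c $ j))) $ i
                 = (- 1 / c $ k) * (B *\<^sub>v vec k (\<lambda>j. c $ j)) $ i"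
                using mv_index[OF B _ i, of "vec k (\<lambda>j. c $ j)"] mv_index[OF B _ i, of "(- 1 / c $ k) \<cdot>\<^sub>v vec k (\<lambda>j. c $ j)"]
                by (simp add: sum_distrib_left algebra_simps)
              from h1 have h3: "(B *\<^sub>v vec k (\<lambda>j. c $ j)) $ i = - (c $ k * w $ i)"
                by (simp add: eq_neg_iff_add_eq_0)
              have "(B *\<^sub>v ((- 1 / c $ k) \<cdot>\<^sub>v vec k (\<lambda>j. c $ j))) $ i = (- 1 / c $ k) * (- (c $ k * w $ i))"
                unfolding h2 h3 ..
              also have "\<dots> = w $ i" using ck by simp
              finally show "w $ i = (B *\<^sub>v ((- 1 / c $ k) \<cdot>\<^sub>v vec k (\<lambda>j. c $ j))) $ i" by simp
            qed (use w B in simp)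
            with nw show False by auto
          qed
          have "B *\<^sub>v vec k (\<lambda>j. c $ j) = 0\<^sub>v n"
          proof (rule eq_vecI)
            fix i assume "i < dim_vec (0\<^sub>v n :: complex vec)"
            then have i: "i < n" by simp
            show "(B *\<^sub>v vec k (\<lambda>j. c $ j)) $ i = 0\<^sub>v n $ i"
              using arg_cong[OF z, of "\<lambda>v. v $ i"] i w B ck by simp
          qed (use B in simp)
          then have "vec k (\<lambda>j. c $ j) = 0\<^sub>v k" using inj B unfolding inj_mat_def by auto
          then have "\<forall>j<k. c $ j = 0" by (metis index_vec index_zero_vec(1))
          then show "c = 0\<^sub>v (dim_col B')" using ck c B' by (auto intro!: eq_vecI simp: less_Suc_eq)
        qed
      qed
      then have "Suc k \<le> k" by (rule kmax)
      then show False by simp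
    qed
  qed
  moreover have "(\<lambda>c. B *\<^sub>v c) ` carrier_vec k \<subseteq> W" using BW by auto
  ultimately show ?thesis using B inj by blast
qed

definition msum :: "nat \<Rightarrow> nat \<Rightarrow> 'g set \<Rightarrow> ('g \<Rightarrow> complex mat) \<Rightarrow> complex mat" where
  "msum n k S f = mat n k (\<lambda>(i,j). \<Sum>g\<in>S. f g $$ (i,j))"

lemma msum_carrier[simp]: "msum n k S f \<in> carrier_mat n k"
  by (simp add: msum_def)

lemma msum_index[simp]: "i < n \<Longrightarrow> j < k \<Longrightarrow> msum n k S f $$ (i,j) = (\<Sum>g\<in>S. f g $$ (i,j))"
  by (simp add: msum_def)

lemma msum_dims[simp]: "dim_row (msum n k S f) = n" "dim_col (msum n k S f) = k"
  by (simp_all add: msum_def)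

lemma msum_mult_left:
  assumes A: "A \<in> carrier_mat r n" and f: "\<And>g. g \<in> S \<Longrightarrow> f g \<in> carrier_mat n k"
  shows "A * msum n k S f = msum r k S (\<lambda>g. A * f g)"
proof (rule eq_matI)
  fix i j assume i: "i < dim_row (msum r k S (\<lambda>g. A * f g))" and j: "j < dim_col (msum r k S (\<lambda>g. A * f g))"
  then have i: "i < r" and j: "j < k" by auto
  have fd: "\<And>g. g \<in> S \<Longrightarrow> dim_row (f g) = n" "\<And>g. g \<in> S \<Longrightarrow> dim_col (f g) = k" using f by auto
  have "(A * msum n k S f) $$ (i,j) = (\<Sum>l<n. A $$ (i,l) * (\<Sum>g\<in>S. f g $$ (l,j)))"
    using A i j by (auto simp: scalar_prod_def lessThan_atLeast0 intro!: sum.cong)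
  also have "\<dots> = (\<Sum>g\<in>S. \<Sum>l<n. A $$ (i,l) * f g $$ (l,j))"
    by (simp add: sum_distrib_left sum.swap[of _ S])
  also have "\<dots> = msum r k S (\<lambda>g. A * f g) $$ (i,j)"
    using A i j fd by (auto simp: scalar_prod_def lessThan_atLeast0 intro!: sum.cong)
  finally show "(A * msum n k S f) $$ (i,j) = msum r k S (\<lambda>g. A * f g) $$ (i,j)" .
qed (use A in auto)

lemma msum_mult_right:
  assumes A: "A \<in> carrier_mat k r" and f: "\<And>g. g \<in> S \<Longrightarrow> f g \<in> carrier_mat n k"
  shows "msum n k S f * A = msum n r S (\<lambda>g. f g * A)"
proof (rule eq_matI)
  fix i j assume i: "i < dim_row (msum n r S (\<lambda>g. f g * A))" and j: "j < dim_col (msum n r S (\<lambda>g. f g * A))"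
  then have i: "i < n" and j: "j < r" by auto
  have fd: "\<And>g. g \<in> S \<Longrightarrow> dim_row (f g) = n" "\<And>g. g \<in> S \<Longrightarrow> dim_col (f g) = k" using f by auto
  have "(msum n k S f * A) $$ (i,j) = (\<Sum>l<k. (\<Sum>g\<in>S. f g $$ (i,l)) * A $$ (l,j))"
    using A i j by (auto simp: scalar_prod_def lessThan_atLeast0 intro!: sum.cong)
  also have "\<dots> = (\<Sum>g\<in>S. \<Sum>l<k. f g $$ (i,l) * A $$ (l,j))"
    by (simp add: sum_distrib_right sum.swap[of _ S])
  also have "\<dots> = msum n r S (\<lambda>g. f g * A) $$ (i,j)"
    using A i j fd by (auto simp: scalar_prod_def lessThan_atLeast0 intro!: sum.cong)
  finally show "(msum n k S f * A) $$ (i,j) = msum n r S (\<lambda>g. f g * A) $$ (i,j)" .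
qed (use A in auto)

lemma msum_trace:
  assumes f: "\<And>g. g \<in> S \<Longrightarrow> f g \<in> carrier_mat n n"
  shows "mat_trace (msum n n S f) = (\<Sum>g\<in>S. mat_trace (f g))"
proof -
  have "mat_trace (msum n n S f) = (\<Sum>i<n. \<Sum>g\<in>S. f g $$ (i,i))" by (simp add: mat_trace_def)
  also have "\<dots> = (\<Sum>g\<in>S. \<Sum>i<n. f g $$ (i,i))" by (rule sum.swap)
  also have "\<dots> = (\<Sum>g\<in>S. mat_trace (f g))"
    by (rule sum.cong) (use f in \<open>auto simp: mat_trace_def\<close>)
  finally show ?thesis .
qed

lemma msum_cong:
  assumes "\<And>g. g \<in> S \<Longrightarrow> f g = f' g"
  shows "msum n k S f = msum n k S f'"
  using assms unfolding msum_def by (auto intro!: sum.cong)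

lemma msum_reindex:
  assumes "bij_betw h S T"
  shows "msum n k T f = msum n k S (\<lambda>g. f (h g))"
proof (rule eq_matI)
  fix i j assume "i < dim_row (msum n k S (\<lambda>g. f (h g)))" "j < dim_col (msum n k S (\<lambda>g. f (h g)))"
  then show "msum n k T f $$ (i,j) = msum n k S (\<lambda>g. f (h g)) $$ (i,j)"
    using sum.reindex_bij_betw[OF assms, of "\<lambda>g. f g $$ (i,j)"] by simp
qed auto

lemma msum_const:
  assumes "P \<in> carrier_mat n k"
  shows "msum n k S (\<lambda>g. P) = of_nat (card S) \<cdot>\<^sub>m P"
  using assms by (auto intro!: eq_matI)

lemma msum_vec:
  assumes f: "\<And>g. g \<in> S \<Longrightarrow> f g \<in> carrier_mat n k" and c: "c \<in> carrier_vec k" and i: "i < n"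
  shows "(msum n k S f *\<^sub>v c) $ i = (\<Sum>g\<in>S. (f g *\<^sub>v c) $ i)"
proof -
  have "(msum n k S f *\<^sub>v c) $ i = (\<Sum>j<k. (\<Sum>g\<in>S. f g $$ (i,j)) * c $ j)"
    using mv_index[OF msum_carrier c i] i by simp
  also have "\<dots> = (\<Sum>g\<in>S. \<Sum>j<k. f g $$ (i,j) * c $ j)"
    by (simp add: sum_distrib_right sum.swap[of _ S])
  also have "\<dots> = (\<Sum>g\<in>S. (f g *\<^sub>v c) $ i)"
    using mv_index[OF f c i] by simp
  finally show ?thesis .
qed

lemma quad_form:
  assumes B: "B \<in> carrier_mat n k" and c: "c \<in> carrier_vec k"
  shows "(\<Sum>i<k. cnj (c $ i) * ((cT B * B) *\<^sub>v c) $ i) = of_real (\<Sum>l<n. (cmod ((B *\<^sub>v c) $ l))^2)"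
proof -
  define w where "w = B *\<^sub>v c"
  have w: "w \<in> carrier_vec n" using B c unfolding w_def by simp
  have z': "(cT B * B) *\<^sub>v c = cT B *\<^sub>v w" using B c assoc_mult_mat_vec[of "cT B" k n B k c] unfolding w_def
    by simp
  have "(\<Sum>i<k. cnj (c $ i) * (cT B *\<^sub>v w) $ i)
      = (\<Sum>i<k. \<Sum>l<n. cnj (c $ i) * (cnj (B $$ (l,i)) * w $ l))"
    using B w by (auto simp: cT_def scalar_prod_def lessThan_atLeast0 sum_distrib_left intro!: sum.cong)
  also have "\<dots> = (\<Sum>l<n. w $ l * cnj (\<Sum>i<k. B $$ (l,i) * c $ i))"
    by (subst sum.swap) (auto simp: sum_distrib_left intro!: sum.cong)
  also have "\<dots> = (\<Sum>l<n. w $ l * cnj (w $ l))"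
    using B c unfolding w_def by (auto simp: scalar_prod_def lessThan_atLeast0 intro!: sum.cong)
  also have "\<dots> = (\<Sum>l<n. of_real ((cmod (w $ l))^2))"
    by (rule sum.cong) (auto simp: complex_norm_square[symmetric] simp del: of_real_power)
  also have "\<dots> = of_real (\<Sum>l<n. (cmod (w $ l))^2)" by simp
  finally show ?thesis unfolding z' w_def .
qed

lemma cT_mult:
  assumes A: "A \<in> carrier_mat n m" and B: "B \<in> carrier_mat m k"
  shows "cT (A * B) = cT B * cT A"
  using A B by (auto intro!: eq_matI simp: cT_def scalar_prod_def mult.commute)

lemma trace_cT: "A \<in> carrier_mat n n \<Longrightarrow> mat_trace (cT A) = cnj (mat_trace A)"
  by (simp add: mat_trace_def cT_def)

section \<open>Representations\<close>

lemma bij_mult_right: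
  assumes G: "group G" and g: "g \<in> carrier G"
  shows "bij_betw (\<lambda>h. h \<otimes>\<^bsub>G\<^esub> g) (carrier G) (carrier G)"
proof -
  interpret group G by (rule G)
  show ?thesis
    by (rule bij_betwI[where g="\<lambda>h. h \<otimes>\<^bsub>G\<^esub> inv\<^bsub>G\<^esub> g"]) (use g in \<open>auto simp: m_assoc\<close>)
qed

lemma bij_mult_left:
  assumes G: "group G" and g: "g \<in> carrier G"
  shows "bij_betw (\<lambda>h. g \<otimes>\<^bsub>G\<^esub> h) (carrier G) (carrier G)"
proof -
  interpret group G by (rule G)
  show ?thesis
    by (rule bij_betwI[where g="\<lambda>h. inv\<^bsub>G\<^esub> g \<otimes>\<^bsub>G\<^esub> h"]) (use g in \<open>auto simp: m_assoc[symmetric]\<close>)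
qed

lemma bij_inv:
  assumes G: "group G"
  shows "bij_betw (\<lambda>h. inv\<^bsub>G\<^esub> h) (carrier G) (carrier G)"
proof -
  interpret group G by (rule G)
  show ?thesis by (rule bij_betwI[where g="\<lambda>h. inv\<^bsub>G\<^esub> h"]) auto
qed


lemma rep_carrier: "is_rep G n \<rho> \<Longrightarrow> g \<in> carrier G \<Longrightarrow> \<rho> g \<in> carrier_mat n n"
  by (simp add: is_rep_def)

lemma rep_mult: "is_rep G n \<rho> \<Longrightarrow> g \<in> carrier G \<Longrightarrow> h \<in> carrier G \<Longrightarrow> \<rho> (g \<otimes>\<^bsub>G\<^esub> h) = \<rho> g * \<rho> h"
  by (simp add: is_rep_def)

lemma rep_one: "is_rep G n \<rho> \<Longrightarrow> \<rho> \<one>\<^bsub>G\<^esub> = 1\<^sub>m n"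
  by (simp add: is_rep_def)

lemma rep_inv:
  assumes G: "group G" and r: "is_rep G n \<rho>" and g: "g \<in> carrier G"
  shows "\<rho> g * \<rho> (inv\<^bsub>G\<^esub> g) = 1\<^sub>m n" "\<rho> (inv\<^bsub>G\<^esub> g) * \<rho> g = 1\<^sub>m n"
proof -
  interpret group G by (rule G)
  show "\<rho> g * \<rho> (inv\<^bsub>G\<^esub> g) = 1\<^sub>m n" using rep_mult[OF r g inv_closed[OF g]] rep_one[OF r] g by simp
  show "\<rho> (inv\<^bsub>G\<^esub> g) * \<rho> g = 1\<^sub>m n" using rep_mult[OF r inv_closed[OF g] g] rep_one[OF r] g by simp
qed

lemma trace_inv_cnj:
  assumes G: "group G" and fin: "finite (carrier G)" and r: "is_rep G n \<rho>" and g: "g \<in> carrier G"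
  shows "cnj (mat_trace (\<rho> g)) = mat_trace (\<rho> (inv\<^bsub>G\<^esub> g))"
proof -
  interpret group G by (rule G)
  have rc: "\<And>h. h \<in> carrier G \<Longrightarrow> \<rho> h \<in> carrier_mat n n" using rep_carrier[OF r] .
  define M where "M = msum n n (carrier G) (\<lambda>h. cT (\<rho> h) * \<rho> h)"
  have M: "M \<in> carrier_mat n n" unfolding M_def by simp
  have fM: "\<And>h. h \<in> carrier G \<Longrightarrow> cT (\<rho> h) * \<rho> h \<in> carrier_mat n n" using rc by (metis cT_carrier mult_carrier_mat)
  have inv: "inj_mat M" unfolding inj_mat_def
  proof (intro ballI impI)
    fix c assume c0: "c \<in> carrier_vec (dim_col M)" and z: "M *\<^sub>v c = 0\<^sub>v (dim_row M)"
    have c: "c \<in> carrier_vec n" using c0 M by simp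
    have hz: "(\<Sum>i<n. cnj (c $ i) * (M *\<^sub>v c) $ i) = 0" using z M by simp
    have e1: "(\<Sum>i<n. cnj (c $ i) * (M *\<^sub>v c) $ i)
        = (\<Sum>i<n. \<Sum>h\<in>carrier G. cnj (c $ i) * ((cT (\<rho> h) * \<rho> h) *\<^sub>v c) $ i)"
    proof (rule sum.cong)
      fix i assume "i \<in> {..<n}"
      then have i: "i < n" by simp
      show "cnj (c $ i) * (M *\<^sub>v c) $ i = (\<Sum>h\<in>carrier G. cnj (c $ i) * ((cT (\<rho> h) * \<rho> h) *\<^sub>v c) $ i)"
        unfolding M_def using msum_vec[of "carrier G" "\<lambda>h. cT (\<rho> h) * \<rho> h" n n c i, OF fM c i]
        by (simp add: sum_distrib_left)
    qed simp
    have e2: "(\<Sum>i<n. \<Sum>h\<in>carrier G. cnj (c $ i) * ((cT (\<rho> h) * \<rho> h) *\<^sub>v c) $ i)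
       = (\<Sum>h\<in>carrier G. \<Sum>i<n. cnj (c $ i) * ((cT (\<rho> h) * \<rho> h) *\<^sub>v c) $ i)"
      by (rule sum.swap)
    have e3: "(\<Sum>h\<in>carrier G. \<Sum>i<n. cnj (c $ i) * ((cT (\<rho> h) * \<rho> h) *\<^sub>v c) $ i)
       = (\<Sum>h\<in>carrier G. complex_of_real (\<Sum>l<n. (cmod ((\<rho> h *\<^sub>v c) $ l))^2))"
      by (rule sum.cong[OF refl], rule quad_form[OF rc c], simp)
    have e4: "(\<Sum>h\<in>carrier G. complex_of_real (\<Sum>l<n. (cmod ((\<rho> h *\<^sub>v c) $ l))^2))
       = complex_of_real (\<Sum>h\<in>carrier G. \<Sum>l<n. (cmod ((\<rho> h *\<^sub>v c) $ l))^2)"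
      by (rule of_real_sum[symmetric])
    have "complex_of_real (\<Sum>h\<in>carrier G. \<Sum>l<n. (cmod ((\<rho> h *\<^sub>v c) $ l))^2) = 0"
      using e1 e2 e3 e4 hz by metis
    then have s0: "(\<Sum>h\<in>carrier G. \<Sum>l<n. (cmod ((\<rho> h *\<^sub>v c) $ l))^2) = 0"
      by (simp only: of_real_eq_0_iff)
    have "\<forall>h\<in>carrier G. (\<Sum>l<n. (cmod ((\<rho> h *\<^sub>v c) $ l))^2) = 0"
      using s0 fin by (subst (asm) sum_nonneg_eq_0_iff) (auto intro: sum_nonneg)
    then have "(\<Sum>l<n. (cmod ((\<rho> \<one>\<^bsub>G\<^esub> *\<^sub>v c) $ l))^2) = 0" by simp
    then have "\<forall>l\<in>{..<n}. (cmod ((\<rho> \<one>\<^bsub>G\<^esub> *\<^sub>v c) $ l))^2 = 0" by (subst (asm) sum_nonneg_eq_0_iff) auto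
    then have "\<forall>l<n. c $ l = 0" using rep_one[OF r] c by simp
    then show "c = 0\<^sub>v (dim_col M)" using c M by (auto intro!: eq_vecI)
  qed
  obtain K where K: "K \<in> carrier_mat n n" "M * K = 1\<^sub>m n" "K * M = 1\<^sub>m n"
    using sq_inj_inverse[OF M inv] by auto
  have key: "cT (\<rho> g) * M * \<rho> g = M"
  proof -
    have "cT (\<rho> g) * M * \<rho> g = msum n n (carrier G) (\<lambda>h. cT (\<rho> g) * (cT (\<rho> h) * \<rho> h) * \<rho> g)"
      unfolding M_def using rc[OF g] fM
      by (subst msum_mult_left[of _ n], force, force, subst msum_mult_right[of _ n], force, metis cT_carrier mult_carrier_mat, simp)
    also have "\<dots> = msum n n (carrier G) (\<lambda>h. cT (\<rho> (h \<otimes>\<^bsub>G\<^esub> g)) * \<rho> (h \<otimes>\<^bsub>G\<^esub> g))"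
    proof (rule msum_cong)
      fix h assume h: "h \<in> carrier G"
      have "\<rho> (h \<otimes>\<^bsub>G\<^esub> g) = \<rho> h * \<rho> g" by (rule rep_mult[OF r h g])
      then have "cT (\<rho> (h \<otimes>\<^bsub>G\<^esub> g)) = cT (\<rho> g) * cT (\<rho> h)" using cT_mult rc[OF h] rc[OF g] by simp
      moreover have c1: "cT (\<rho> g) \<in> carrier_mat n n" "cT (\<rho> h) \<in> carrier_mat n n"
        using cT_carrier[OF rc[OF h]] cT_carrier[OF rc[OF g]] by auto
      moreover have "cT (\<rho> h) * \<rho> h \<in> carrier_mat n n" using c1 rc[OF h] by (metis mult_carrier_mat)
      ultimately show "cT (\<rho> g) * (cT (\<rho> h) * \<rho> h) * \<rho> g = cT (\<rho> (h \<otimes>\<^bsub>G\<^esub> g)) * \<rho> (h \<otimes>\<^bsub>G\<^esub> g)"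
        using rc[OF h] rc[OF g] \<open>\<rho> (h \<otimes>\<^bsub>G\<^esub> g) = \<rho> h * \<rho> g\<close>
        by (simp add: assoc_mult_mat[of _ n n _ n _ n])
    qed
    also have "\<dots> = M"
    proof -
      have "bij_betw (\<lambda>h. h \<otimes>\<^bsub>G\<^esub> g) (carrier G) (carrier G)"
        by (rule bij_mult_right[OF G g])
      then show ?thesis unfolding M_def by (rule msum_reindex[symmetric])
    qed
    finally show ?thesis .
  qed
  have gi: "inv\<^bsub>G\<^esub> g \<in> carrier G" using g by simp
  have cg: "cT (\<rho> g) \<in> carrier_mat n n" using cT_carrier[OF rc[OF g]] .
  have cgM: "cT (\<rho> g) * M \<in> carrier_mat n n" using cg M by (metis mult_carrier_mat)
  have "cT (\<rho> g) = cT (\<rho> g) * M * K"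
    unfolding assoc_mult_mat[OF cg M K(1)] K(2) by (rule right_mult_one_mat[OF cg, symmetric])
  also have "\<dots> = cT (\<rho> g) * M * (\<rho> g * \<rho> (inv\<^bsub>G\<^esub> g)) * K"
    unfolding rep_inv(1)[OF G r g] right_mult_one_mat[OF cgM] ..
  also have "\<dots> = (cT (\<rho> g) * M * \<rho> g) * \<rho> (inv\<^bsub>G\<^esub> g) * K"
    unfolding assoc_mult_mat[OF cgM rc[OF g] rc[OF gi]] ..
  also have "\<dots> = M * (\<rho> (inv\<^bsub>G\<^esub> g) * K)" unfolding key by (rule assoc_mult_mat[OF M rc[OF gi] K(1)])
  finally have e: "cT (\<rho> g) = M * (\<rho> (inv\<^bsub>G\<^esub> g) * K)" .
  have "cnj (mat_trace (\<rho> g)) = mat_trace (M * (\<rho> (inv\<^bsub>G\<^esub> g) * K))"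
    using trace_cT[OF rc[OF g]] e by simp
  also have "\<dots> = mat_trace ((\<rho> (inv\<^bsub>G\<^esub> g) * K) * M)"
    by (rule trace_comm[OF M]) (use rc[OF gi] K in simp)
  also have "\<dots> = mat_trace (\<rho> (inv\<^bsub>G\<^esub> g))"
    unfolding assoc_mult_mat[OF rc[OF gi] K(1) M] K(3) right_mult_one_mat[OF rc[OF gi]] ..
  finally show ?thesis .
qed

lemma mv_zero: "A \<in> carrier_mat m k \<Longrightarrow> A *\<^sub>v 0\<^sub>v k = (0\<^sub>v m :: complex vec)"
  by (auto intro!: eq_vecI simp: scalar_prod_def)

lemma zero_mv[simp]: "v \<in> carrier_vec k \<Longrightarrow> 0\<^sub>m m k *\<^sub>v v = (0\<^sub>v m :: complex vec)"
  by (auto intro!: eq_vecI simp: scalar_prod_def)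

lemma irrep_rep: "is_irrep G n \<rho> \<Longrightarrow> is_rep G n \<rho>"
  by (simp add: is_irrep_def)

lemma irrep_pos: "is_irrep G n \<rho> \<Longrightarrow> n > 0"
  by (simp add: is_irrep_def)

lemma irrep_inv: "is_irrep G n \<rho> \<Longrightarrow> invariant_subspace G n \<rho> W \<Longrightarrow> W = {0\<^sub>v n} \<or> W = carrier_vec n"
  by (simp add: is_irrep_def)

lemma schur_kernel:
  assumes r: "is_rep G m \<rho>" and s: "is_irrep G k \<sigma>" and T: "T \<in> carrier_mat m k"
    and tw: "\<And>g. g \<in> carrier G \<Longrightarrow> \<rho> g * T = T * \<sigma> g"
  shows "T = 0\<^sub>m m k \<or> inj_mat T"
proof -
  define K where "K = {v \<in> carrier_vec k. T *\<^sub>v v = 0\<^sub>v m}"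
  have "invariant_subspace G k \<sigma> K"
    unfolding invariant_subspace_def
  proof (intro conjI ballI allI)
    show "K \<subseteq> carrier_vec k" unfolding K_def by auto
    show "0\<^sub>v k \<in> K" unfolding K_def using mv_zero[OF T] by auto
  next
    fix v w assume "v \<in> K" "w \<in> K"
    then show "v + w \<in> K" unfolding K_def using T by (auto simp: mult_add_distrib_mat_vec[OF T])
  next
    fix c v assume "v \<in> K"
    then show "c \<cdot>\<^sub>v v \<in> K" unfolding K_def using T by (auto simp: mult_mat_vec[OF T])
  next
    fix g v assume g: "g \<in> carrier G" and v: "v \<in> K"
    have sg: "\<sigma> g \<in> carrier_mat k k" using rep_carrier[OF irrep_rep[OF s] g] .
    have rg: "\<rho> g \<in> carrier_mat m m" using rep_carrier[OF r g] .
    have "T *\<^sub>v (\<sigma> g *\<^sub>v v) = (T * \<sigma> g) *\<^sub>v v" using v T sg unfolding K_def by simp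
    also have "\<dots> = (\<rho> g * T) *\<^sub>v v" using tw[OF g] by simp
    also have "\<dots> = \<rho> g *\<^sub>v (T *\<^sub>v v)" using v T rg unfolding K_def by simp
    also have "\<dots> = 0\<^sub>v m" using v mv_zero[OF rg] unfolding K_def by simp
    finally show "\<sigma> g *\<^sub>v v \<in> K" using v sg unfolding K_def by simp
  qed
  then have "K = {0\<^sub>v k} \<or> K = carrier_vec k" by (rule irrep_inv[OF s])
  then show ?thesis
  proof
    assume "K = {0\<^sub>v k}"
    then have "inj_mat T" unfolding inj_mat_def K_def using T by auto
    then show ?thesis ..
  next
    assume "K = carrier_vec k"
    then have "T = 0\<^sub>m m k" using T by (intro mat_eq_by_vec[OF T]) (auto simp: K_def mv_zero)
    then show ?thesis ..
  qed
qed

lemma schur_image: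
  assumes r: "is_irrep G m \<rho>" and s: "is_rep G k \<sigma>" and T: "T \<in> carrier_mat m k"
    and tw: "\<And>g. g \<in> carrier G \<Longrightarrow> \<rho> g * T = T * \<sigma> g"
  shows "T = 0\<^sub>m m k \<or> (\<forall>w\<in>carrier_vec m. \<exists>v\<in>carrier_vec k. T *\<^sub>v v = w)"
proof -
  define I where "I = (\<lambda>v. T *\<^sub>v v) ` carrier_vec k"
  have "invariant_subspace G m \<rho> I"
    unfolding invariant_subspace_def
  proof (intro conjI ballI allI)
    show "I \<subseteq> carrier_vec m" unfolding I_def using T by auto
    show "0\<^sub>v m \<in> I" unfolding I_def using mv_zero[OF T] by (auto intro!: image_eqI[of _ _ "0\<^sub>v k"])
  next
    fix v w assume "v \<in> I" "w \<in> I"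
    then obtain a b where "a \<in> carrier_vec k" "b \<in> carrier_vec k" "v = T *\<^sub>v a" "w = T *\<^sub>v b"
      unfolding I_def by auto
    then show "v + w \<in> I" unfolding I_def using T
      by (auto simp: mult_add_distrib_mat_vec[OF T] intro!: image_eqI[of _ _ "a + b"])
  next
    fix c v assume "v \<in> I"
    then obtain a where "a \<in> carrier_vec k" "v = T *\<^sub>v a" unfolding I_def by auto
    then show "c \<cdot>\<^sub>v v \<in> I" unfolding I_def using T
      by (auto simp: mult_mat_vec[OF T] intro!: image_eqI[of _ _ "c \<cdot>\<^sub>v a"])
  next
    fix g v assume g: "g \<in> carrier G" and v: "v \<in> I"
    then obtain a where a: "a \<in> carrier_vec k" "v = T *\<^sub>v a" unfolding I_def by auto
    have sg: "\<sigma> g \<in> carrier_mat k k" using rep_carrier[OF s g] .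
    have rg: "\<rho> g \<in> carrier_mat m m" using rep_carrier[OF irrep_rep[OF r] g] .
    have "\<rho> g *\<^sub>v v = (\<rho> g * T) *\<^sub>v a" using a T rg by simp
    also have "\<dots> = (T * \<sigma> g) *\<^sub>v a" using tw[OF g] by simp
    also have "\<dots> = T *\<^sub>v (\<sigma> g *\<^sub>v a)" using a T sg by simp
    finally show "\<rho> g *\<^sub>v v \<in> I" unfolding I_def using a sg by auto
  qed
  then have "I = {0\<^sub>v m} \<or> I = carrier_vec m" by (rule irrep_inv[OF r])
  then show ?thesis
  proof
    assume "I = {0\<^sub>v m}"
    then have "T = 0\<^sub>m m k" using T by (intro mat_eq_by_vec[OF T]) (auto simp: I_def mv_zero)
    then show ?thesis ..
  next
    assume I: "I = carrier_vec m"
    have "\<forall>w\<in>carrier_vec m. \<exists>v\<in>carrier_vec k. T *\<^sub>v v = w"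
    proof
      fix w :: "complex vec" assume "w \<in> carrier_vec m"
      then have "w \<in> I" using I by simp
      then show "\<exists>v\<in>carrier_vec k. T *\<^sub>v v = w" unfolding I_def by blast
    qed
    then show ?thesis ..
  qed
qed

lemma schur_char:
  assumes r: "is_irrep G m \<rho>" and s: "is_irrep G k \<sigma>" and T: "T \<in> carrier_mat m k"
    and tw: "\<And>g. g \<in> carrier G \<Longrightarrow> \<rho> g * T = T * \<sigma> g" and nz: "T \<noteq> 0\<^sub>m m k"
  shows "\<forall>g\<in>carrier G. mat_trace (\<rho> g) = mat_trace (\<sigma> g)"
proof
  fix g assume g: "g \<in> carrier G"
  have inj: "inj_mat T" using schur_kernel[OF irrep_rep[OF r] s T tw] nz by auto
  have surj: "\<forall>w\<in>carrier_vec m. \<exists>v\<in>carrier_vec k. T *\<^sub>v v = w"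
    using schur_image[OF r irrep_rep[OF s] T tw] nz by auto
  obtain S where S: "S \<in> carrier_mat k m" "1\<^sub>m m = T * S"
  proof -
    have "\<exists>X\<in>carrier_mat k m. 1\<^sub>m m = T * X"
    proof (rule col_span_factor[OF one_carrier_mat T])
      fix j assume j: "j < m"
      have "col (1\<^sub>m m) j \<in> carrier_vec m" using col_dim[of "1\<^sub>m m" j] by simp
      then show "\<exists>c\<in>carrier_vec k. col (1\<^sub>m m) j = T *\<^sub>v c" using surj by metis
    qed
    then show ?thesis using that by blast
  qed
  obtain L where L: "L \<in> carrier_mat k m" "L * T = 1\<^sub>m k" using left_inverse[OF T inj] by auto
  have ST: "S * T = 1\<^sub>m k"
  proof -
    have STc: "S * T \<in> carrier_mat k k" using S(1) T by (metis mult_carrier_mat)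
    have "S * T = (L * T) * (S * T)" unfolding L(2) by (rule left_mult_one_mat[OF STc, symmetric])
    also have "\<dots> = L * (T * (S * T))" by (rule assoc_mult_mat[OF L(1) T STc])
    also have "T * (S * T) = (T * S) * T" by (rule assoc_mult_mat[OF T S(1) T, symmetric])
    also have "\<dots> = T" unfolding S(2)[symmetric] using T by simp
    finally show ?thesis using L(2) by simp
  qed
  have sg: "\<sigma> g \<in> carrier_mat k k" using rep_carrier[OF irrep_rep[OF s] g] .
  have rg: "\<rho> g \<in> carrier_mat m m" using rep_carrier[OF irrep_rep[OF r] g] .
  have "\<sigma> g = S * (T * \<sigma> g)"
    using assoc_mult_mat[OF S(1) T sg, symmetric] ST sg by simp
  also have "\<dots> = S * (\<rho> g * T)" using tw[OF g] by simp
  finally have e: "\<sigma> g = S * (\<rho> g * T)" .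
  have "mat_trace (\<sigma> g) = mat_trace ((\<rho> g * T) * S)"
    unfolding e by (rule trace_comm[OF S(1)]) (use rg T in simp)
  also have "\<dots> = mat_trace (\<rho> g)"
    unfolding assoc_mult_mat[OF rg T S(1)] S(2)[symmetric] right_mult_one_mat[OF rg] ..
  finally show "mat_trace (\<rho> g) = mat_trace (\<sigma> g)" by simp
qed

lemma schur_scalar:
  assumes r: "is_irrep G m \<rho>" and T: "T \<in> carrier_mat m m"
    and tw: "\<And>g. g \<in> carrier G \<Longrightarrow> \<rho> g * T = T * \<rho> g"
  shows "\<exists>c. T = c \<cdot>\<^sub>m 1\<^sub>m m"
proof -
  obtain c where "c \<in> spectrum T" using spectrum_non_empty[OF T irrep_pos[OF r]] by auto
  then obtain v where v: "v \<in> carrier_vec m" "v \<noteq> 0\<^sub>v m" "T *\<^sub>v v = c \<cdot>\<^sub>v v"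
    unfolding spectrum_def eigenvalue_def eigenvector_def using T by auto
  define T' where "T' = T - c \<cdot>\<^sub>m 1\<^sub>m m"
  have T': "T' \<in> carrier_mat m m" unfolding T'_def by (rule minus_carrier_mat) simp
  have tw': "\<rho> g * T' = T' * \<rho> g" if g: "g \<in> carrier G" for g
  proof -
    have rg: "\<rho> g \<in> carrier_mat m m" using rep_carrier[OF irrep_rep[OF r] g] .
    have "\<rho> g * T' = \<rho> g * T - \<rho> g * (c \<cdot>\<^sub>m 1\<^sub>m m)"
      unfolding T'_def by (rule mult_minus_distrib_mat[OF rg T]) simp
    also have "\<rho> g * (c \<cdot>\<^sub>m 1\<^sub>m m) = c \<cdot>\<^sub>m \<rho> g"
      using mult_smult_distrib[OF rg one_carrier_mat] rg by simp
    also have "c \<cdot>\<^sub>m \<rho> g = (c \<cdot>\<^sub>m 1\<^sub>m m) * \<rho> g"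
      using mult_smult_assoc_mat[OF one_carrier_mat rg] rg by simp
    also have "\<rho> g * T - (c \<cdot>\<^sub>m 1\<^sub>m m) * \<rho> g = T' * \<rho> g"
      unfolding T'_def tw[OF g] by (rule minus_mult_distrib_mat[symmetric]) (use T rg in auto)
    finally show ?thesis .
  qed
  have "T' *\<^sub>v v = 0\<^sub>v m"
  proof -
    have "T' *\<^sub>v v = T *\<^sub>v v - (c \<cdot>\<^sub>m 1\<^sub>m m) *\<^sub>v v"
      unfolding T'_def by (rule minus_mult_distrib_mat_vec[OF T _ v(1)]) simp
    also have "(c \<cdot>\<^sub>m 1\<^sub>m m) *\<^sub>v v = c \<cdot>\<^sub>v v"
    proof (rule eq_vecI)
      fix i assume "i < dim_vec (c \<cdot>\<^sub>v v)"
      then have i: "i < m" using v(1) by simp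
      have "((c \<cdot>\<^sub>m 1\<^sub>m m) *\<^sub>v v) $ i = (\<Sum>j<m. (if j = i then c * v $ j else 0))"
        using mv_index[of "c \<cdot>\<^sub>m 1\<^sub>m m" m m v i] v(1) i by (auto intro!: sum.cong)
      also have "\<dots> = c * v $ i" using i by simp
      finally show "((c \<cdot>\<^sub>m 1\<^sub>m m) *\<^sub>v v) $ i = (c \<cdot>\<^sub>v v) $ i" using i v(1) by simp
    qed (use v(1) in simp)
    finally show ?thesis using v by simp
  qed
  then have "\<not> inj_mat T'" using v T' unfolding inj_mat_def by auto
  then have "T' = 0\<^sub>m m m" using schur_kernel[OF irrep_rep[OF r] r T' tw'] by auto
  then have Tz: "T - c \<cdot>\<^sub>m 1\<^sub>m m = 0\<^sub>m m m" unfolding T'_def .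
  have "T = c \<cdot>\<^sub>m 1\<^sub>m m"
  proof (rule eq_matI)
    fix i j assume "i < dim_row (c \<cdot>\<^sub>m 1\<^sub>m m)" "j < dim_col (c \<cdot>\<^sub>m 1\<^sub>m m)"
    then have ij: "i < m" "j < m" by auto
    have "(T - c \<cdot>\<^sub>m 1\<^sub>m m) $$ (i,j) = 0" using Tz ij by simp
    then show "T $$ (i,j) = (c \<cdot>\<^sub>m 1\<^sub>m m) $$ (i,j)" using ij T by (simp split: if_splits)
  qed (use T in auto)
  then show ?thesis ..
qed

definition Eab :: "nat \<Rightarrow> nat \<Rightarrow> nat \<Rightarrow> nat \<Rightarrow> complex mat" where
  "Eab m k a b = mat m k (\<lambda>(i,j). if i = a \<and> j = b then 1 else 0)"

lemma Eab_carrier[simp]: "Eab m k a b \<in> carrier_mat m k" by (simp add: Eab_def)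
lemma Eab_dims[simp]: "dim_row (Eab m k a b) = m" "dim_col (Eab m k a b) = k" by (simp_all add: Eab_def)

lemma Eab_entry:
  assumes A: "A \<in> carrier_mat m m" and B: "B \<in> carrier_mat k k"
    and a: "a < m" and b: "b < k" and i: "i < m" and j: "j < k"
  shows "(A * Eab m k a b * B) $$ (i,j) = A $$ (i,a) * B $$ (b,j)"
proof -
  have AE: "A * Eab m k a b \<in> carrier_mat m k" using A by (metis Eab_carrier mult_carrier_mat)
  have e1: "(A * Eab m k a b) $$ (i,l) = (if l = b then A $$ (i,a) else 0)" if l: "l < k" for l
  proof -
    have "(A * Eab m k a b) $$ (i,l) = (\<Sum>x<m. A $$ (i,x) * (if x = a \<and> l = b then 1 else 0))"
      using A i l by (auto simp: Eab_def scalar_prod_def lessThan_atLeast0 intro!: sum.cong)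
    also have "\<dots> = (\<Sum>x<m. if x = a then (if l = b then A $$ (i,x) else 0) else 0)"
      by (rule sum.cong) auto
    also have "\<dots> = (if l = b then A $$ (i,a) else 0)" using a by simp
    finally show ?thesis .
  qed
  have "(A * Eab m k a b * B) $$ (i,j) = (\<Sum>l<k. (A * Eab m k a b) $$ (i,l) * B $$ (l,j))"
    using AE A B i j by (auto simp: scalar_prod_def lessThan_atLeast0 intro!: sum.cong)
  also have "\<dots> = (\<Sum>l<k. if l = b then A $$ (i,a) * B $$ (l,j) else 0)"
    by (rule sum.cong) (auto simp: e1)
  also have "\<dots> = A $$ (i,a) * B $$ (b,j)" using b by simp
  finally show ?thesis .
qed

definition TT :: "('a,'b) monoid_scheme \<Rightarrow> ('a \<Rightarrow> complex mat) \<Rightarrow> ('a \<Rightarrow> complex mat) \<Rightarrow> nat \<Rightarrow> nat \<Rightarrow> nat \<Rightarrow> nat \<Rightarrow> complex mat" where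
  "TT G \<rho> \<sigma> m k a b = msum m k (carrier G) (\<lambda>g. \<rho> g * Eab m k a b * \<sigma> (inv\<^bsub>G\<^esub> g))"

lemma TT_carrier[simp]: "TT G \<rho> \<sigma> m k a b \<in> carrier_mat m k" by (simp add: TT_def)

lemma TT_entry:
  assumes G: "group G" and r: "is_rep G m \<rho>" and s: "is_rep G k \<sigma>"
    and a: "a < m" and b: "b < k" and i: "i < m" and j: "j < k"
  shows "TT G \<rho> \<sigma> m k a b $$ (i,j) = (\<Sum>g\<in>carrier G. \<rho> g $$ (i,a) * \<sigma> (inv\<^bsub>G\<^esub> g) $$ (b,j))"
proof -
  interpret group G by (rule G)
  show ?thesis unfolding TT_def using i j
    by (auto intro!: sum.cong Eab_entry[OF rep_carrier[OF r] rep_carrier[OF s] a b i j])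
qed

lemma TT_intertw:
  assumes G: "group G" and r: "is_rep G m \<rho>" and s: "is_rep G k \<sigma>" and h: "h \<in> carrier G"
  shows "\<rho> h * TT G \<rho> \<sigma> m k a b = TT G \<rho> \<sigma> m k a b * \<sigma> h"
proof -
  interpret group G by (rule G)
  let ?E = "Eab m k a b"
  have rc: "\<And>g. g \<in> carrier G \<Longrightarrow> \<rho> g \<in> carrier_mat m m" using rep_carrier[OF r] .
  have sc: "\<And>g. g \<in> carrier G \<Longrightarrow> \<sigma> g \<in> carrier_mat k k" using rep_carrier[OF s] .
  have fc: "\<And>g. g \<in> carrier G \<Longrightarrow> \<rho> g * ?E * \<sigma> (inv\<^bsub>G\<^esub> g) \<in> carrier_mat m k"
    using rc sc by (meson Eab_carrier inv_closed mult_carrier_mat)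
  have "\<rho> h * TT G \<rho> \<sigma> m k a b = msum m k (carrier G) (\<lambda>g. \<rho> h * (\<rho> g * ?E * \<sigma> (inv\<^bsub>G\<^esub> g)))"
    unfolding TT_def by (rule msum_mult_left[OF rc[OF h] fc])
  also have "\<dots> = msum m k (carrier G) (\<lambda>g. \<rho> (h \<otimes>\<^bsub>G\<^esub> g) * ?E * \<sigma> (inv\<^bsub>G\<^esub> g))"
  proof (rule msum_cong)
    fix g assume g: "g \<in> carrier G"
    have "\<rho> h * (\<rho> g * ?E * \<sigma> (inv\<^bsub>G\<^esub> g)) = \<rho> h * (\<rho> g * ?E) * \<sigma> (inv\<^bsub>G\<^esub> g)"
      by (rule assoc_mult_mat[symmetric, OF rc[OF h] _ sc]) (use rc[OF g] g in \<open>auto intro: mult_carrier_mat\<close>)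
    also have "\<rho> h * (\<rho> g * ?E) = \<rho> (h \<otimes>\<^bsub>G\<^esub> g) * ?E"
      unfolding rep_mult[OF r h g] by (rule assoc_mult_mat[symmetric, OF rc[OF h] rc[OF g] Eab_carrier])
    finally show "\<rho> h * (\<rho> g * ?E * \<sigma> (inv\<^bsub>G\<^esub> g)) = \<rho> (h \<otimes>\<^bsub>G\<^esub> g) * ?E * \<sigma> (inv\<^bsub>G\<^esub> g)" .
  qed
  also have "\<dots> = msum m k (carrier G) (\<lambda>g. \<rho> (h \<otimes>\<^bsub>G\<^esub> (inv\<^bsub>G\<^esub> h \<otimes>\<^bsub>G\<^esub> g)) * ?E * \<sigma> (inv\<^bsub>G\<^esub> (inv\<^bsub>G\<^esub> h \<otimes>\<^bsub>G\<^esub> g)))"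
    by (rule msum_reindex[OF bij_mult_left[OF G inv_closed[OF h]]])
  also have "\<dots> = msum m k (carrier G) (\<lambda>g. (\<rho> g * ?E * \<sigma> (inv\<^bsub>G\<^esub> g)) * \<sigma> h)"
  proof (rule msum_cong)
    fix g assume g: "g \<in> carrier G"
    have e1: "h \<otimes>\<^bsub>G\<^esub> (inv\<^bsub>G\<^esub> h \<otimes>\<^bsub>G\<^esub> g) = g" using g h by (simp add: m_assoc[symmetric])
    have e2: "inv\<^bsub>G\<^esub> (inv\<^bsub>G\<^esub> h \<otimes>\<^bsub>G\<^esub> g) = inv\<^bsub>G\<^esub> g \<otimes>\<^bsub>G\<^esub> h" using g h by (simp add: inv_mult_group)
    have "\<sigma> (inv\<^bsub>G\<^esub> g \<otimes>\<^bsub>G\<^esub> h) = \<sigma> (inv\<^bsub>G\<^esub> g) * \<sigma> h" using rep_mult[OF s _ h] g by simp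
    moreover have "\<rho> g * ?E \<in> carrier_mat m k" using rc[OF g] by (metis Eab_carrier mult_carrier_mat)
    ultimately show "\<rho> (h \<otimes>\<^bsub>G\<^esub> (inv\<^bsub>G\<^esub> h \<otimes>\<^bsub>G\<^esub> g)) * ?E * \<sigma> (inv\<^bsub>G\<^esub> (inv\<^bsub>G\<^esub> h \<otimes>\<^bsub>G\<^esub> g))
        = (\<rho> g * ?E * \<sigma> (inv\<^bsub>G\<^esub> g)) * \<sigma> h"
      unfolding e1 e2 using sc[OF h] sc[of "inv\<^bsub>G\<^esub> g"] g by (simp add: assoc_mult_mat[of _ m k _ k _ k])
  qed
  also have "\<dots> = TT G \<rho> \<sigma> m k a b * \<sigma> h"
    unfolding TT_def by (rule msum_mult_right[OF sc[OF h] fc, symmetric])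
  finally show ?thesis .
qed

lemma char_sum_TT:
  assumes G: "group G" and r: "is_rep G m \<rho>" and s: "is_rep G k \<sigma>"
  shows "(\<Sum>g\<in>carrier G. mat_trace (\<rho> g) * mat_trace (\<sigma> (inv\<^bsub>G\<^esub> g)))
       = (\<Sum>i<m. \<Sum>j<k. TT G \<rho> \<sigma> m k i j $$ (i,j))"
proof -
  interpret group G by (rule G)
  have "(\<Sum>i<m. \<Sum>j<k. TT G \<rho> \<sigma> m k i j $$ (i,j))
      = (\<Sum>i<m. \<Sum>j<k. \<Sum>g\<in>carrier G. \<rho> g $$ (i,i) * \<sigma> (inv\<^bsub>G\<^esub> g) $$ (j,j))"
    by (intro sum.cong refl) (simp add: TT_entry[OF G r s])
  also have "\<dots> = (\<Sum>i<m. \<Sum>g\<in>carrier G. \<Sum>j<k. \<rho> g $$ (i,i) * \<sigma> (inv\<^bsub>G\<^esub> g) $$ (j,j))"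
    by (rule sum.cong[OF refl], rule sum.swap)
  also have "\<dots> = (\<Sum>g\<in>carrier G. \<Sum>i<m. \<Sum>j<k. \<rho> g $$ (i,i) * \<sigma> (inv\<^bsub>G\<^esub> g) $$ (j,j))"
    by (rule sum.swap)
  also have "\<dots> = (\<Sum>g\<in>carrier G. mat_trace (\<rho> g) * mat_trace (\<sigma> (inv\<^bsub>G\<^esub> g)))"
  proof (rule sum.cong[OF refl])
    fix g assume g: "g \<in> carrier G"
    have "dim_row (\<rho> g) = m" "dim_row (\<sigma> (inv\<^bsub>G\<^esub> g)) = k"
      using rep_carrier[OF r g] rep_carrier[OF s inv_closed[OF g]] by auto
    then show "(\<Sum>i<m. \<Sum>j<k. \<rho> g $$ (i,i) * \<sigma> (inv\<^bsub>G\<^esub> g) $$ (j,j))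
        = mat_trace (\<rho> g) * mat_trace (\<sigma> (inv\<^bsub>G\<^esub> g))"
      by (simp add: mat_trace_def sum_product)
  qed
  finally show ?thesis by simp
qed

lemma orth_diff:
  assumes G: "group G" and r: "is_irrep G m \<rho>" and s: "is_irrep G k \<sigma>"
    and nz: "(\<Sum>g\<in>carrier G. mat_trace (\<rho> g) * mat_trace (\<sigma> (inv\<^bsub>G\<^esub> g))) \<noteq> 0"
  shows "\<forall>g\<in>carrier G. mat_trace (\<rho> g) = mat_trace (\<sigma> g)"
proof -
  from nz obtain i j where ij: "i < m" "j < k" "TT G \<rho> \<sigma> m k i j \<noteq> 0\<^sub>m m k"
    unfolding char_sum_TT[OF G irrep_rep[OF r] irrep_rep[OF s]]
    by (metis (no_types, lifting) index_zero_mat(1) lessThan_iff sum.neutral)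
  show ?thesis
    by (rule schur_char[OF r s TT_carrier TT_intertw[OF G irrep_rep[OF r] irrep_rep[OF s]] ij(3)])
qed

lemma orth_self:
  assumes G: "group G" and fin: "finite (carrier G)" and r: "is_irrep G m \<rho>"
  shows "(\<Sum>g\<in>carrier G. mat_trace (\<rho> g) * mat_trace (\<rho> (inv\<^bsub>G\<^esub> g))) = of_nat (card (carrier G))"
proof -
  interpret group G by (rule G)
  have m0: "m > 0" by (rule irrep_pos[OF r])
  have rr: "is_rep G m \<rho>" by (rule irrep_rep[OF r])
  have rc: "\<And>g. g \<in> carrier G \<Longrightarrow> \<rho> g \<in> carrier_mat m m" using rep_carrier[OF rr] .
  have diag: "TT G \<rho> \<rho> m m i j $$ (i,j) = (if i = j then of_nat (card (carrier G)) / of_nat m else 0)"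
    if ij: "i < m" "j < m" for i j
  proof -
    obtain c where c: "TT G \<rho> \<rho> m m i j = c \<cdot>\<^sub>m 1\<^sub>m m"
      using schur_scalar[OF r TT_carrier TT_intertw[OF G rr rr]] by blast
    have "mat_trace (TT G \<rho> \<rho> m m i j) = (\<Sum>g\<in>carrier G. mat_trace (\<rho> g * Eab m m i j * \<rho> (inv\<^bsub>G\<^esub> g)))"
      unfolding TT_def by (rule msum_trace) (meson Eab_carrier inv_closed mult_carrier_mat rc)
    also have "\<dots> = (\<Sum>g\<in>carrier G. mat_trace (Eab m m i j))"
    proof (rule sum.cong[OF refl])
      fix g assume g: "g \<in> carrier G"
      have gi: "inv\<^bsub>G\<^esub> g \<in> carrier G" using g by simp
      have "mat_trace (\<rho> g * Eab m m i j * \<rho> (inv\<^bsub>G\<^esub> g)) = mat_trace (\<rho> g * (Eab m m i j * \<rho> (inv\<^bsub>G\<^esub> g)))"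
        using assoc_mult_mat[OF rc[OF g] Eab_carrier rc[OF gi]] by simp
      also have "\<dots> = mat_trace ((Eab m m i j * \<rho> (inv\<^bsub>G\<^esub> g)) * \<rho> g)"
        by (rule trace_comm[OF rc[OF g]]) (meson Eab_carrier mult_carrier_mat rc[OF gi])
      also have "\<dots> = mat_trace (Eab m m i j * (\<rho> (inv\<^bsub>G\<^esub> g) * \<rho> g))"
        using assoc_mult_mat[OF Eab_carrier rc[OF gi] rc[OF g]] by simp
      also have "\<dots> = mat_trace (Eab m m i j)" using rep_inv(2)[OF G rr g] right_mult_one_mat[OF Eab_carrier[of m m i j]] by simp
      finally show "mat_trace (\<rho> g * Eab m m i j * \<rho> (inv\<^bsub>G\<^esub> g)) = mat_trace (Eab m m i j)" .
    qed
    also have "\<dots> = of_nat (card (carrier G)) * (if i = j then 1 else 0)"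
      using ij by (simp add: mat_trace_def Eab_def)
    finally have tr: "mat_trace (TT G \<rho> \<rho> m m i j) = of_nat (card (carrier G)) * (if i = j then 1 else 0)" .
    have "mat_trace (c \<cdot>\<^sub>m 1\<^sub>m m) = c * of_nat m" by (simp add: mat_trace_def)
    with tr c have cm: "c * of_nat m = of_nat (card (carrier G)) * (if i = j then 1 else 0)" by simp
    show ?thesis
    proof (cases "i = j")
      case True
      then have "c = of_nat (card (carrier G)) / of_nat m" using cm m0 by (simp add: field_simps)
      then show ?thesis using c ij True by simp
    next
      case False
      then show ?thesis using c ij by simp
    qed
  qed
  have "(\<Sum>g\<in>carrier G. mat_trace (\<rho> g) * mat_trace (\<rho> (inv\<^bsub>G\<^esub> g)))
      = (\<Sum>i<m. \<Sum>j<m. TT G \<rho> \<rho> m m i j $$ (i,j))" by (rule char_sum_TT[OF G rr rr])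
  also have "\<dots> = (\<Sum>i<m. of_nat (card (carrier G)) / of_nat m)"
    by (rule sum.cong[OF refl]) (simp add: diag)
  also have "\<dots> = of_nat (card (carrier G))" using m0 by simp
  finally show ?thesis .
qed

lemma col_unit:
  fixes A :: "complex mat"
  assumes A: "A \<in> carrier_mat m n" and j: "j < n"
  shows "col A j = A *\<^sub>v unit_vec n j"
proof (rule eq_vecI)
  fix i assume "i < dim_vec (A *\<^sub>v unit_vec n j)"
  then have i: "i < m" using A by simp
  have "(A *\<^sub>v unit_vec n j) $ i = (\<Sum>l<n. A $$ (i,l) * unit_vec n j $ l)"
    by (rule mv_index[OF A unit_vec_carrier[of n j] i])
  also have "\<dots> = (\<Sum>l<n. if l = j then A $$ (i,l) else 0)"
    by (rule sum.cong) (use j in auto)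
  finally show "col A j $ i = (A *\<^sub>v unit_vec n j) $ i" using i j A by simp
qed (use A in simp)

lemma trace_minus: "(A :: complex mat) \<in> carrier_mat n n \<Longrightarrow> B \<in> carrier_mat n n \<Longrightarrow> mat_trace (A - B) = mat_trace A - mat_trace B"
  by (simp add: mat_trace_def sum_subtractf)

lemma sub_rep:
  assumes r: "is_rep G n \<theta>" and E: "E \<in> carrier_mat n n" and idem: "E * E = E"
    and com: "\<And>g. g \<in> carrier G \<Longrightarrow> \<theta> g * E = E * \<theta> g"
  shows "\<exists>k \<rho>. is_rep G k \<rho> \<and> of_nat k = mat_trace E \<and>
     (\<forall>g\<in>carrier G. mat_trace (\<rho> g) = mat_trace (\<theta> g * E)) \<and> (k = 0 \<longrightarrow> E = 0\<^sub>m n n)"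
proof -
  have tc: "\<And>g. g \<in> carrier G \<Longrightarrow> \<theta> g \<in> carrier_mat n n" using rep_carrier[OF r] .
  define W where "W = (\<lambda>v. E *\<^sub>v v) ` carrier_vec n"
  have "subsp n W" unfolding subsp_def W_def
  proof (intro conjI ballI allI)
    show "(*\<^sub>v) E ` carrier_vec n \<subseteq> carrier_vec n" using E by auto
    show "0\<^sub>v n \<in> (*\<^sub>v) E ` carrier_vec n" using mv_zero[OF E] by (auto intro!: image_eqI[of _ _ "0\<^sub>v n"])
  next
    fix v w assume "v \<in> (*\<^sub>v) E ` carrier_vec n" "w \<in> (*\<^sub>v) E ` carrier_vec n"
    then obtain a b where "a \<in> carrier_vec n" "b \<in> carrier_vec n" "v = E *\<^sub>v a" "w = E *\<^sub>v b" by auto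
    then show "v + w \<in> (*\<^sub>v) E ` carrier_vec n"
      by (auto simp: mult_add_distrib_mat_vec[OF E] intro!: image_eqI[of _ _ "a + b"])
  next
    fix c v assume "v \<in> (*\<^sub>v) E ` carrier_vec n"
    then obtain a where "a \<in> carrier_vec n" "v = E *\<^sub>v a" by auto
    then show "c \<cdot>\<^sub>v v \<in> (*\<^sub>v) E ` carrier_vec n"
      by (auto simp: mult_mat_vec[OF E] intro!: image_eqI[of _ _ "c \<cdot>\<^sub>v a"])
  qed
  from basis_exists[OF this] obtain k B where B: "B \<in> carrier_mat n k" and inj: "inj_mat B"
    and WB: "W = (\<lambda>c. B *\<^sub>v c) ` carrier_vec k" by auto
  obtain Y where Y: "Y \<in> carrier_mat k n" and EBY: "E = B * Y"
  proof -
    have "\<exists>X\<in>carrier_mat k n. E = B * X"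
    proof (rule col_span_factor[OF E B])
      fix j assume j: "j < n"
      have "col E j \<in> W" unfolding W_def col_unit[OF E j] by auto
      then show "\<exists>c\<in>carrier_vec k. col E j = B *\<^sub>v c" unfolding WB by auto
    qed
    then show ?thesis using that by blast
  qed
  obtain V where V: "V \<in> carrier_mat n k" and BEV: "B = E * V"
  proof -
    have "\<exists>X\<in>carrier_mat n k. B = E * X"
    proof (rule col_span_factor[OF B E])
      fix j assume j: "j < k"
      have "col B j \<in> W" unfolding WB col_unit[OF B j] by auto
      then show "\<exists>c\<in>carrier_vec n. col B j = E *\<^sub>v c" unfolding W_def by auto
    qed
    then show ?thesis using that by blast
  qed
  have EB: "E * B = B"
    unfolding BEV assoc_mult_mat[OF E E V, symmetric] idem ..
  obtain L where L: "L \<in> carrier_mat k n" "L * B = 1\<^sub>m k" using left_inverse[OF B inj] by auto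
  have YB: "Y * B = 1\<^sub>m k"
  proof -
    have YBc: "Y * B \<in> carrier_mat k k" using Y B by (metis mult_carrier_mat)
    have "Y * B = (L * B) * (Y * B)" unfolding L(2) by (rule left_mult_one_mat[OF YBc, symmetric])
    also have "\<dots> = L * (B * (Y * B))" by (rule assoc_mult_mat[OF L(1) B YBc])
    also have "B * (Y * B) = (B * Y) * B" by (rule assoc_mult_mat[OF B Y B, symmetric])
    also have "\<dots> = B" unfolding EBY[symmetric] EB ..
    finally show ?thesis using L(2) by simp
  qed
  define \<rho> where "\<rho> g = Y * (\<theta> g * B)" for g
  have tBc: "\<theta> g * B \<in> carrier_mat n k" if g: "g \<in> carrier G" for g
    using tc[OF g] B by (rule mult_carrier_mat)
  have rc: "\<rho> g \<in> carrier_mat k k" if g: "g \<in> carrier G" for g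
    unfolding \<rho>_def using Y tc[OF g] B by (metis mult_carrier_mat)
  have tB: "\<theta> g * B = B * \<rho> g" if g: "g \<in> carrier G" for g
  proof -
    have "\<theta> g * B = \<theta> g * (E * B)" unfolding EB ..
    also have "\<dots> = (\<theta> g * E) * B" by (rule assoc_mult_mat[OF tc[OF g] E B, symmetric])
    also have "\<dots> = (E * \<theta> g) * B" unfolding com[OF g] ..
    also have "\<dots> = E * (\<theta> g * B)" by (rule assoc_mult_mat[OF E tc[OF g] B])
    also have "\<dots> = (B * Y) * (\<theta> g * B)" unfolding EBY ..
    also have "\<dots> = B * \<rho> g" unfolding \<rho>_def
      by (rule assoc_mult_mat[OF B Y tBc[OF g]])
    finally show ?thesis .
  qed
  have "is_rep G k \<rho>" unfolding is_rep_def
  proof (intro conjI ballI)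
    fix g assume "g \<in> carrier G" then show "\<rho> g \<in> carrier_mat k k" by (rule rc)
  next
    show "\<rho> \<one>\<^bsub>G\<^esub> = 1\<^sub>m k" unfolding \<rho>_def rep_one[OF r] using B YB by simp
  next
    fix g h assume g: "g \<in> carrier G" and h: "h \<in> carrier G"
    have "\<rho> (g \<otimes>\<^bsub>G\<^esub> h) = Y * (\<theta> g * \<theta> h * B)" unfolding \<rho>_def rep_mult[OF r g h] ..
    also have "\<theta> g * \<theta> h * B = \<theta> g * (\<theta> h * B)" by (rule assoc_mult_mat[OF tc[OF g] tc[OF h] B])
    also have "\<dots> = \<theta> g * (B * \<rho> h)" unfolding tB[OF h] ..
    also have "\<dots> = (\<theta> g * B) * \<rho> h" by (rule assoc_mult_mat[OF tc[OF g] B rc[OF h], symmetric])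
    also have "Y * (\<theta> g * B * \<rho> h) = (Y * (\<theta> g * B)) * \<rho> h"
      by (rule assoc_mult_mat[symmetric, OF Y tBc[OF g] rc[OF h]])
    finally show "\<rho> (g \<otimes>\<^bsub>G\<^esub> h) = \<rho> g * \<rho> h" unfolding \<rho>_def .
  qed
  moreover have "of_nat k = mat_trace E"
  proof -
    have "of_nat k = mat_trace (Y * B)" unfolding YB by simp
    also have "\<dots> = mat_trace (B * Y)" by (rule trace_comm[OF Y B])
    finally show ?thesis unfolding EBY .
  qed
  moreover have "\<forall>g\<in>carrier G. mat_trace (\<rho> g) = mat_trace (\<theta> g * E)"
  proof
    fix g assume g: "g \<in> carrier G"
    have "mat_trace (\<rho> g) = mat_trace ((\<theta> g * B) * Y)" unfolding \<rho>_def by (rule trace_comm[OF Y tBc[OF g]])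
    also have "\<dots> = mat_trace (\<theta> g * E)" unfolding EBY assoc_mult_mat[OF tc[OF g] B Y] ..
    finally show "mat_trace (\<rho> g) = mat_trace (\<theta> g * E)" .
  qed
  moreover have "k = 0 \<longrightarrow> E = 0\<^sub>m n n"
  proof
    assume k0: "k = 0"
    show "E = 0\<^sub>m n n" unfolding EBY
    proof (rule eq_matI)
      fix i j assume "i < dim_row (0\<^sub>m n n :: complex mat)" "j < dim_col (0\<^sub>m n n :: complex mat)"
      then have ij: "i < n" "j < n" by auto
      have "(B * Y) $$ (i,j) = row B i \<bullet> col Y j" using ij B Y by simp
      also have "\<dots> = 0" using Y k0 by (simp add: scalar_prod_def)
      finally show "(B * Y) $$ (i,j) = 0\<^sub>m n n $$ (i,j)" using ij by simp
    qed (use B Y in auto)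
  qed
  ultimately show ?thesis by blast
qed

lemma avg_intertw:
  assumes G: "group G" and r: "is_rep G m \<rho>" and s: "is_rep G k \<sigma>" and h: "h \<in> carrier G"
    and X: "X \<in> carrier_mat m k"
  shows "\<rho> h * msum m k (carrier G) (\<lambda>g. \<rho> g * X * \<sigma> (inv\<^bsub>G\<^esub> g))
       = msum m k (carrier G) (\<lambda>g. \<rho> g * X * \<sigma> (inv\<^bsub>G\<^esub> g)) * \<sigma> h"
proof -
  interpret group G by (rule G)
  have rc: "\<And>g. g \<in> carrier G \<Longrightarrow> \<rho> g \<in> carrier_mat m m" using rep_carrier[OF r] .
  have sc: "\<And>g. g \<in> carrier G \<Longrightarrow> \<sigma> g \<in> carrier_mat k k" using rep_carrier[OF s] .
  have fc: "\<And>g. g \<in> carrier G \<Longrightarrow> \<rho> g * X * \<sigma> (inv\<^bsub>G\<^esub> g) \<in> carrier_mat m k"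
    using rc sc X by (meson inv_closed mult_carrier_mat)
  have "\<rho> h * msum m k (carrier G) (\<lambda>g. \<rho> g * X * \<sigma> (inv\<^bsub>G\<^esub> g)) = msum m k (carrier G) (\<lambda>g. \<rho> h * (\<rho> g * X * \<sigma> (inv\<^bsub>G\<^esub> g)))"
    by (rule msum_mult_left[OF rc[OF h] fc])
  also have "\<dots> = msum m k (carrier G) (\<lambda>g. \<rho> (h \<otimes>\<^bsub>G\<^esub> g) * X * \<sigma> (inv\<^bsub>G\<^esub> g))"
  proof (rule msum_cong)
    fix g assume g: "g \<in> carrier G"
    have "\<rho> h * (\<rho> g * X * \<sigma> (inv\<^bsub>G\<^esub> g)) = \<rho> h * (\<rho> g * X) * \<sigma> (inv\<^bsub>G\<^esub> g)"
      by (rule assoc_mult_mat[symmetric, OF rc[OF h] _ sc]) (use rc[OF g] g X in \<open>auto intro: mult_carrier_mat\<close>)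
    also have "\<rho> h * (\<rho> g * X) = \<rho> (h \<otimes>\<^bsub>G\<^esub> g) * X"
      unfolding rep_mult[OF r h g] by (rule assoc_mult_mat[symmetric, OF rc[OF h] rc[OF g] X])
    finally show "\<rho> h * (\<rho> g * X * \<sigma> (inv\<^bsub>G\<^esub> g)) = \<rho> (h \<otimes>\<^bsub>G\<^esub> g) * X * \<sigma> (inv\<^bsub>G\<^esub> g)" .
  qed
  also have "\<dots> = msum m k (carrier G) (\<lambda>g. \<rho> (h \<otimes>\<^bsub>G\<^esub> (inv\<^bsub>G\<^esub> h \<otimes>\<^bsub>G\<^esub> g)) * X * \<sigma> (inv\<^bsub>G\<^esub> (inv\<^bsub>G\<^esub> h \<otimes>\<^bsub>G\<^esub> g)))"
    by (rule msum_reindex[OF bij_mult_left[OF G inv_closed[OF h]]])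
  also have "\<dots> = msum m k (carrier G) (\<lambda>g. (\<rho> g * X * \<sigma> (inv\<^bsub>G\<^esub> g)) * \<sigma> h)"
  proof (rule msum_cong)
    fix g assume g: "g \<in> carrier G"
    have e1: "h \<otimes>\<^bsub>G\<^esub> (inv\<^bsub>G\<^esub> h \<otimes>\<^bsub>G\<^esub> g) = g" using g h by (simp add: m_assoc[symmetric])
    have e2: "inv\<^bsub>G\<^esub> (inv\<^bsub>G\<^esub> h \<otimes>\<^bsub>G\<^esub> g) = inv\<^bsub>G\<^esub> g \<otimes>\<^bsub>G\<^esub> h" using g h by (simp add: inv_mult_group)
    have "\<sigma> (inv\<^bsub>G\<^esub> g \<otimes>\<^bsub>G\<^esub> h) = \<sigma> (inv\<^bsub>G\<^esub> g) * \<sigma> h" using rep_mult[OF s _ h] g by simp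
    moreover have "\<rho> g * X \<in> carrier_mat m k" using rc[OF g] X by (metis mult_carrier_mat)
    ultimately show "\<rho> (h \<otimes>\<^bsub>G\<^esub> (inv\<^bsub>G\<^esub> h \<otimes>\<^bsub>G\<^esub> g)) * X * \<sigma> (inv\<^bsub>G\<^esub> (inv\<^bsub>G\<^esub> h \<otimes>\<^bsub>G\<^esub> g))
        = (\<rho> g * X * \<sigma> (inv\<^bsub>G\<^esub> g)) * \<sigma> h"
      unfolding e1 e2 using sc[OF h] sc[of "inv\<^bsub>G\<^esub> g"] g by (simp add: assoc_mult_mat[of _ m k _ k _ k])
  qed
  also have "\<dots> = msum m k (carrier G) (\<lambda>g. \<rho> g * X * \<sigma> (inv\<^bsub>G\<^esub> g)) * \<sigma> h"
    by (rule msum_mult_right[OF sc[OF h] fc, symmetric])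
  finally show ?thesis .
qed

lemma minus_zero_mat': "(A :: complex mat) \<in> carrier_mat n m \<Longrightarrow> A - 0\<^sub>m n m = A"
  by (auto intro!: eq_matI)

lemma idem_compl:
  fixes E :: "complex mat"
  assumes E: "E \<in> carrier_mat n n" and idem: "E * E = E"
  shows "(1\<^sub>m n - E) * (1\<^sub>m n - E) = 1\<^sub>m n - E"
proof -
  have IE: "1\<^sub>m n - E \<in> carrier_mat n n" using E by (intro minus_carrier_mat)
  have "(1\<^sub>m n - E) * (1\<^sub>m n - E) = (1\<^sub>m n - E) * 1\<^sub>m n - (1\<^sub>m n - E) * E"
    by (rule mult_minus_distrib_mat[OF IE one_carrier_mat E])
  also have "(1\<^sub>m n - E) * 1\<^sub>m n = 1\<^sub>m n - E" by (rule right_mult_one_mat[OF IE])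
  also have "(1\<^sub>m n - E) * E = 1\<^sub>m n * E - E * E" by (rule minus_mult_distrib_mat[OF one_carrier_mat E E])
  also have "\<dots> = 0\<^sub>m n n" using E idem by simp
  finally show ?thesis using minus_zero_mat'[OF IE] by simp
qed

lemma compl_comm:
  fixes E A :: "complex mat"
  assumes E: "E \<in> carrier_mat n n" and A: "A \<in> carrier_mat n n" and c: "A * E = E * A"
  shows "A * (1\<^sub>m n - E) = (1\<^sub>m n - E) * A"
proof -
  have "A * (1\<^sub>m n - E) = A * 1\<^sub>m n - A * E" by (rule mult_minus_distrib_mat[OF A one_carrier_mat E])
  also have "\<dots> = 1\<^sub>m n * A - E * A" using A c by simp
  also have "\<dots> = (1\<^sub>m n - E) * A" by (rule minus_mult_distrib_mat[symmetric, OF one_carrier_mat E A])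
  finally show ?thesis .
qed

lemma inv_sub_subsp: "invariant_subspace G n \<theta> W \<Longrightarrow> subsp n W"
  by (simp add: invariant_subspace_def subsp_def)

lemma proj_exists:
  assumes G: "group G" and fin: "finite (carrier G)" and r: "is_rep G n \<theta>"
    and W: "invariant_subspace G n \<theta> W" and W0: "W \<noteq> {0\<^sub>v n}" and W1: "W \<noteq> carrier_vec n"
  shows "\<exists>Q\<in>carrier_mat n n. Q * Q = Q \<and> (\<forall>g\<in>carrier G. \<theta> g * Q = Q * \<theta> g)
     \<and> Q \<noteq> 0\<^sub>m n n \<and> Q \<noteq> 1\<^sub>m n"
proof -
  interpret group G by (rule G)
  have tc: "\<And>g. g \<in> carrier G \<Longrightarrow> \<theta> g \<in> carrier_mat n n" using rep_carrier[OF r] .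
  have Ws: "subsp n W" by (rule inv_sub_subsp[OF W])
  have Winv: "\<And>g v. g \<in> carrier G \<Longrightarrow> v \<in> W \<Longrightarrow> \<theta> g *\<^sub>v v \<in> W"
    using W unfolding invariant_subspace_def by auto
  have Wc: "W \<subseteq> carrier_vec n" using Ws unfolding subsp_def by auto
  obtain k B where B: "B \<in> carrier_mat n k" and inj: "inj_mat B" and WB: "W = (\<lambda>c. B *\<^sub>v c) ` carrier_vec k"
    using basis_exists[OF Ws] by auto
  obtain L where L: "L \<in> carrier_mat k n" "L * B = 1\<^sub>m k" using left_inverse[OF B inj] by auto
  define P where "P = B * L"
  have P: "P \<in> carrier_mat n n" unfolding P_def using B L by (metis mult_carrier_mat)
  have Pfix: "P *\<^sub>v w = w" if w: "w \<in> W" for w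
  proof -
    from w obtain c where c: "c \<in> carrier_vec k" "w = B *\<^sub>v c" unfolding WB by auto
    have "P *\<^sub>v w = B *\<^sub>v (L *\<^sub>v (B *\<^sub>v c))" unfolding P_def c(2) using B L c by simp
    also have "L *\<^sub>v (B *\<^sub>v c) = c" using assoc_mult_mat_vec[OF L(1) B c(1), symmetric] L(2) c by simp
    finally show ?thesis using c by simp
  qed
  have Pin: "P *\<^sub>v v \<in> W" if v: "v \<in> carrier_vec n" for v
    unfolding WB P_def using B L v by (auto intro!: image_eqI[of _ _ "L *\<^sub>v v"])
  have PtP: "P * \<theta> g * P = \<theta> g * P" if g: "g \<in> carrier G" for g
  proof (rule mat_eq_by_vec)
    show "P * \<theta> g * P \<in> carrier_mat n n" using P tc[OF g] by (metis mult_carrier_mat)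
    show "\<theta> g * P \<in> carrier_mat n n" using P tc[OF g] by (metis mult_carrier_mat)
    fix v :: "complex vec" assume v: "v \<in> carrier_vec n"
    have "(P * \<theta> g * P) *\<^sub>v v = (P * \<theta> g) *\<^sub>v (P *\<^sub>v v)"
      by (rule assoc_mult_mat_vec[OF mult_carrier_mat[OF P tc[OF g]] P v])
    also have "\<dots> = P *\<^sub>v (\<theta> g *\<^sub>v (P *\<^sub>v v))"
      by (rule assoc_mult_mat_vec[OF P tc[OF g]]) (use P v in simp)
    also have "\<dots> = \<theta> g *\<^sub>v (P *\<^sub>v v)" by (rule Pfix[OF Winv[OF g Pin[OF v]]])
    also have "\<dots> = (\<theta> g * P) *\<^sub>v v" using P tc[OF g] v by simp
    finally show "(P * \<theta> g * P) *\<^sub>v v = (\<theta> g * P) *\<^sub>v v" .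
  qed
  define N where "N = card (carrier G)"
  have N0: "N > 0" unfolding N_def using fin one_closed by (auto simp: card_gt_0_iff)
  define S where "S = msum n n (carrier G) (\<lambda>g. \<theta> g * P * \<theta> (inv\<^bsub>G\<^esub> g))"
  have S: "S \<in> carrier_mat n n" unfolding S_def by simp
  have fc: "\<And>g. g \<in> carrier G \<Longrightarrow> \<theta> g * P * \<theta> (inv\<^bsub>G\<^esub> g) \<in> carrier_mat n n"
    using tc P by (meson inv_closed mult_carrier_mat)
  have Scom: "\<theta> h * S = S * \<theta> h" if h: "h \<in> carrier G" for h
    unfolding S_def by (rule avg_intertw[OF G r r h P])
  have SP: "S * P = of_nat N \<cdot>\<^sub>m P"
  proof -
    have "S * P = msum n n (carrier G) (\<lambda>g. \<theta> g * P * \<theta> (inv\<^bsub>G\<^esub> g) * P)"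
      unfolding S_def by (rule msum_mult_right[OF P fc])
    also have "\<dots> = msum n n (carrier G) (\<lambda>g. P)"
    proof (rule msum_cong)
      fix g assume g: "g \<in> carrier G"
      have gi: "inv\<^bsub>G\<^esub> g \<in> carrier G" using g by simp
      have tgP: "\<theta> g * P \<in> carrier_mat n n" using tc[OF g] P by (metis mult_carrier_mat)
      have "\<theta> g * P * \<theta> (inv\<^bsub>G\<^esub> g) * P = \<theta> g * (P * \<theta> (inv\<^bsub>G\<^esub> g) * P)"
        using assoc_mult_mat[OF tgP tc[OF gi] P] assoc_mult_mat[OF tc[OF g] P tc[OF gi]]
          assoc_mult_mat[OF tc[OF g] P mult_carrier_mat[OF tc[OF gi] P]]
          assoc_mult_mat[OF P tc[OF gi] P] by simp
      also have "\<dots> = \<theta> g * (\<theta> (inv\<^bsub>G\<^esub> g) * P)" unfolding PtP[OF gi] ..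
      also have "\<dots> = P" using assoc_mult_mat[OF tc[OF g] tc[OF gi] P, symmetric] rep_inv(1)[OF G r g] P
        by simp
      finally show "\<theta> g * P * \<theta> (inv\<^bsub>G\<^esub> g) * P = P" .
    qed
    also have "\<dots> = of_nat N \<cdot>\<^sub>m P" unfolding N_def by (rule msum_const[OF P])
    finally show ?thesis .
  qed
  have PS: "P * S = S"
  proof -
    have "P * S = msum n n (carrier G) (\<lambda>g. P * (\<theta> g * P * \<theta> (inv\<^bsub>G\<^esub> g)))"
      unfolding S_def by (rule msum_mult_left[OF P fc])
    also have "\<dots> = S" unfolding S_def
    proof (rule msum_cong)
      fix g assume g: "g \<in> carrier G"
      have gi: "inv\<^bsub>G\<^esub> g \<in> carrier G" using g by simp
      have tgP: "\<theta> g * P \<in> carrier_mat n n" using tc[OF g] P by (metis mult_carrier_mat)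
      have "P * (\<theta> g * P * \<theta> (inv\<^bsub>G\<^esub> g)) = (P * \<theta> g * P) * \<theta> (inv\<^bsub>G\<^esub> g)"
        using assoc_mult_mat[OF P tgP tc[OF gi], symmetric] assoc_mult_mat[OF P tc[OF g] P, symmetric] by simp
      then show "P * (\<theta> g * P * \<theta> (inv\<^bsub>G\<^esub> g)) = \<theta> g * P * \<theta> (inv\<^bsub>G\<^esub> g)" unfolding PtP[OF g] .
    qed
    finally show ?thesis .
  qed
  define Q where "Q = (1 / of_nat N) \<cdot>\<^sub>m S"
  have Q: "Q \<in> carrier_mat n n" unfolding Q_def using S by simp
  have QP: "Q * P = P"
    unfolding Q_def mult_smult_assoc_mat[OF S P] SP using N0 P by (auto intro!: eq_matI)
  have PQ: "P * Q = Q"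
    unfolding Q_def mult_smult_distrib[OF P S] PS ..
  have QQ: "Q * Q = Q"
  proof -
    have "Q * Q = Q * (P * Q)" unfolding PQ ..
    also have "\<dots> = (Q * P) * Q" by (rule assoc_mult_mat[OF Q P Q, symmetric])
    finally show ?thesis unfolding QP PQ .
  qed
  have Qcom: "\<theta> g * Q = Q * \<theta> g" if g: "g \<in> carrier G" for g
    unfolding Q_def mult_smult_distrib[OF tc[OF g] S] mult_smult_assoc_mat[OF S tc[OF g]] Scom[OF g] ..
  have Q0: "Q \<noteq> 0\<^sub>m n n"
  proof
    assume Qz: "Q = 0\<^sub>m n n"
    obtain w where w: "w \<in> W" "w \<noteq> 0\<^sub>v n" using W0 Ws unfolding subsp_def by auto
    have wc: "w \<in> carrier_vec n" using w Wc by auto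
    have "Q *\<^sub>v w = Q *\<^sub>v (P *\<^sub>v w)" using Pfix[OF w(1)] by simp
    also have "\<dots> = (Q * P) *\<^sub>v w" using Q P wc by simp
    also have "\<dots> = w" unfolding QP by (rule Pfix[OF w(1)])
    finally have "Q *\<^sub>v w = w" .
    then show False using Qz w wc by simp
  qed
  have Q1: "Q \<noteq> 1\<^sub>m n"
  proof
    assume Qo: "Q = 1\<^sub>m n"
    obtain v where v: "v \<in> carrier_vec n" "v \<notin> W" using W1 Wc by auto
    have "Q *\<^sub>v v = (P * Q) *\<^sub>v v" unfolding PQ ..
    also have "\<dots> = P *\<^sub>v (Q *\<^sub>v v)" using P Q v(1) by simp
    finally have "Q *\<^sub>v v \<in> W" using Pin[of "Q *\<^sub>v v"] Q v(1) by simp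
    then show False using Qo v by simp
  qed
  show ?thesis using Q QQ Qcom Q0 Q1 by blast
qed

lemma decomp:
  assumes G: "group G" and fin: "finite (carrier G)" and r: "is_rep G n \<theta>"
  shows "\<exists>ps. (\<forall>p\<in>set ps. is_irrep G (fst p) (snd p)) \<and> sum_list (map fst ps) = n \<and>
     (\<forall>g\<in>carrier G. mat_trace (\<theta> g) = sum_list (map (\<lambda>p. mat_trace (snd p g)) ps))"
  using r
proof (induction n arbitrary: \<theta> rule: less_induct)
  case (less n \<theta>)
  have tc: "\<And>g. g \<in> carrier G \<Longrightarrow> \<theta> g \<in> carrier_mat n n" using rep_carrier[OF less.prems] .
  show ?case
  proof (cases "n = 0")
    case True
    show ?thesis
    proof (intro exI[of _ "[]"] conjI ballI)
      fix g assume g: "g \<in> carrier G"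
      have "dim_row (\<theta> g) = 0" using tc[OF g] True by simp
      then show "mat_trace (\<theta> g) = sum_list (map (\<lambda>p. mat_trace (snd p g)) [])" by (simp add: mat_trace_def)
    qed (use True in auto)
  next
    case n0: False
    show ?thesis
    proof (cases "is_irrep G n \<theta>")
      case True
      then show ?thesis by (intro exI[of _ "[(n, \<theta>)]"]) auto
    next
      case False
      then obtain W where W: "invariant_subspace G n \<theta> W" and W0: "W \<noteq> {0\<^sub>v n}" and W1: "W \<noteq> carrier_vec n"
        using less.prems n0 unfolding is_irrep_def by auto
      obtain Q where Q: "Q \<in> carrier_mat n n" and QQ: "Q * Q = Q"
        and Qc: "\<And>g. g \<in> carrier G \<Longrightarrow> \<theta> g * Q = Q * \<theta> g" and Q0: "Q \<noteq> 0\<^sub>m n n" and Q1: "Q \<noteq> 1\<^sub>m n"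
        using proj_exists[OF G fin less.prems W W0 W1] by blast
      have Q': "1\<^sub>m n - Q \<in> carrier_mat n n" using Q by (intro minus_carrier_mat)
      obtain k1 \<rho>1 where r1: "is_rep G k1 \<rho>1" and k1: "of_nat k1 = mat_trace Q"
        and t1: "\<forall>g\<in>carrier G. mat_trace (\<rho>1 g) = mat_trace (\<theta> g * Q)" and z1: "k1 = 0 \<longrightarrow> Q = 0\<^sub>m n n"
        using sub_rep[OF less.prems Q QQ Qc] by blast
      obtain k2 \<rho>2 where r2: "is_rep G k2 \<rho>2" and k2: "of_nat k2 = mat_trace (1\<^sub>m n - Q)"
        and t2: "\<forall>g\<in>carrier G. mat_trace (\<rho>2 g) = mat_trace (\<theta> g * (1\<^sub>m n - Q))"
        and z2: "k2 = 0 \<longrightarrow> 1\<^sub>m n - Q = 0\<^sub>m n n"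
        using sub_rep[OF less.prems Q' idem_compl[OF Q QQ] compl_comm[OF Q tc Qc]] by blast
      have "of_nat (k1 + k2) = (of_nat n :: complex)"
        using k1 k2 trace_minus[OF one_carrier_mat Q] by simp
      then have kn: "k1 + k2 = n" by (simp only: of_nat_eq_iff)
      have "k1 \<noteq> 0" using z1 Q0 by auto
      moreover have "k2 \<noteq> 0"
      proof
        assume "k2 = 0"
        then have "1\<^sub>m n - Q = 0\<^sub>m n n" using z2 by simp
        note Qz = this
        have "Q = 1\<^sub>m n"
        proof (rule eq_matI)
          fix i j assume "i < dim_row (1\<^sub>m n :: complex mat)" "j < dim_col (1\<^sub>m n :: complex mat)"
          then have ij: "i < n" "j < n" by auto
          have "(1\<^sub>m n - Q) $$ (i,j) = 0" using Qz ij by simp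
          then show "Q $$ (i,j) = 1\<^sub>m n $$ (i,j)" using ij Q by (simp split: if_splits)
        qed (use Q in auto)
        then show False using Q1 by simp
      qed
      ultimately have kl: "k1 < n" "k2 < n" using kn by auto
      obtain ps1 where ps1: "\<forall>p\<in>set ps1. is_irrep G (fst p) (snd p)" "sum_list (map fst ps1) = k1"
        "\<forall>g\<in>carrier G. mat_trace (\<rho>1 g) = sum_list (map (\<lambda>p. mat_trace (snd p g)) ps1)"
        using less.IH[OF kl(1) r1] by blast
      obtain ps2 where ps2: "\<forall>p\<in>set ps2. is_irrep G (fst p) (snd p)" "sum_list (map fst ps2) = k2"
        "\<forall>g\<in>carrier G. mat_trace (\<rho>2 g) = sum_list (map (\<lambda>p. mat_trace (snd p g)) ps2)"
        using less.IH[OF kl(2) r2] by blast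
      have "\<forall>g\<in>carrier G. mat_trace (\<theta> g) = sum_list (map (\<lambda>p. mat_trace (snd p g)) (ps1 @ ps2))"
      proof
        fix g assume g: "g \<in> carrier G"
        have "\<theta> g * (1\<^sub>m n - Q) = \<theta> g * 1\<^sub>m n - \<theta> g * Q"
          by (rule mult_minus_distrib_mat[OF tc[OF g] one_carrier_mat Q])
        then have "mat_trace (\<theta> g * (1\<^sub>m n - Q)) = mat_trace (\<theta> g) - mat_trace (\<theta> g * Q)"
          using trace_minus[of "\<theta> g" n "\<theta> g * Q"] tc[OF g] Q by (simp add: mult_carrier_mat)
        then have "mat_trace (\<theta> g) = mat_trace (\<rho>1 g) + mat_trace (\<rho>2 g)" using t1 t2 g by simp
        then show "mat_trace (\<theta> g) = sum_list (map (\<lambda>p. mat_trace (snd p g)) (ps1 @ ps2))"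
          using ps1(3) ps2(3) g by simp
      qed
      then show ?thesis using ps1 ps2 kn by (intro exI[of _ "ps1 @ ps2"]) auto
    qed
  qed
qed

definition same :: "('a,'b) monoid_scheme \<Rightarrow> ('a \<Rightarrow> complex mat) \<Rightarrow> ('a \<Rightarrow> complex mat) \<Rightarrow> bool" where
  "same G \<rho> \<sigma> \<longleftrightarrow> (\<forall>g\<in>carrier G. mat_trace (\<rho> g) = mat_trace (\<sigma> g))"

lemma same_sym: "same G \<rho> \<sigma> \<Longrightarrow> same G \<sigma> \<rho>" by (simp add: same_def)
lemma same_trans: "same G \<rho> \<sigma> \<Longrightarrow> same G \<sigma> \<tau> \<Longrightarrow> same G \<rho> \<tau>" by (simp add: same_def)
lemma same_refl: "same G \<rho> \<rho>" by (simp add: same_def)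

lemma rep_inner_cong2:
  assumes "\<forall>g\<in>carrier G. mat_trace (\<theta> g) = t g"
  shows "rep_inner G \<rho> \<theta> = (\<Sum>g\<in>carrier G. mat_trace (\<rho> g) * cnj (t g)) / of_nat (card (carrier G))"
  unfolding rep_inner_def using assms by (simp cong: sum.cong)

lemma rep_inner_lin2:
  assumes "\<forall>g\<in>carrier G. mat_trace (\<theta> g) = sum_list (map (\<lambda>p. mat_trace (snd p g)) ps)"
  shows "rep_inner G \<rho> \<theta> = sum_list (map (\<lambda>p. rep_inner G \<rho> (snd p)) ps)"
  using assms
proof (induction ps arbitrary: \<theta>)
  case Nil
  then show ?case unfolding rep_inner_def by simp
next
  case (Cons p ps)
  define \<theta>' where "\<theta>' g = mat 1 1 (\<lambda>_. sum_list (map (\<lambda>p. mat_trace (snd p g)) ps))" for g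
  have t': "mat_trace (\<theta>' g) = sum_list (map (\<lambda>p. mat_trace (snd p g)) ps)" for g
    by (simp add: \<theta>'_def mat_trace_def)
  have IH: "rep_inner G \<rho> \<theta>' = sum_list (map (\<lambda>p. rep_inner G \<rho> (snd p)) ps)"
    by (rule Cons.IH) (simp add: t')
  have "rep_inner G \<rho> \<theta> = (\<Sum>g\<in>carrier G. mat_trace (\<rho> g) * cnj (mat_trace (snd p g) + mat_trace (\<theta>' g))) / of_nat (card (carrier G))"
    by (rule rep_inner_cong2) (use Cons.prems t' in simp)
  also have "\<dots> = rep_inner G \<rho> (snd p) + rep_inner G \<rho> \<theta>'"
    unfolding rep_inner_def by (simp add: algebra_simps sum.distrib add_divide_distrib)
  finally show ?case using IH by simp
qed

lemma rep_inner_lin1: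
  assumes "\<forall>g\<in>carrier G. mat_trace (\<theta> g) = sum_list (map (\<lambda>p. mat_trace (snd p g)) ps)"
  shows "rep_inner G \<theta> \<chi> = sum_list (map (\<lambda>p. rep_inner G (snd p) \<chi>) ps)"
  using assms
proof (induction ps arbitrary: \<theta>)
  case Nil
  then show ?case unfolding rep_inner_def by simp
next
  case (Cons p ps)
  define \<theta>' where "\<theta>' g = mat 1 1 (\<lambda>_. sum_list (map (\<lambda>p. mat_trace (snd p g)) ps))" for g
  have t': "mat_trace (\<theta>' g) = sum_list (map (\<lambda>p. mat_trace (snd p g)) ps)" for g
    by (simp add: \<theta>'_def mat_trace_def)
  have IH: "rep_inner G \<theta>' \<chi> = sum_list (map (\<lambda>p. rep_inner G (snd p) \<chi>) ps)"
    by (rule Cons.IH) (simp add: t')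
  have "rep_inner G \<theta> \<chi> = (\<Sum>g\<in>carrier G. (mat_trace (snd p g) + mat_trace (\<theta>' g)) * cnj (mat_trace (\<chi> g))) / of_nat (card (carrier G))"
    unfolding rep_inner_def using Cons.prems t' by (simp cong: sum.cong)
  also have "\<dots> = rep_inner G (snd p) \<chi> + rep_inner G \<theta>' \<chi>"
    unfolding rep_inner_def by (simp add: algebra_simps sum.distrib add_divide_distrib)
  finally show ?case using IH by simp
qed

lemma rep_inner_inv:
  assumes G: "group G" and fin: "finite (carrier G)" and s: "is_rep G k \<sigma>"
  shows "rep_inner G \<rho> \<sigma> = (\<Sum>g\<in>carrier G. mat_trace (\<rho> g) * mat_trace (\<sigma> (inv\<^bsub>G\<^esub> g))) / of_nat (card (carrier G))"
  unfolding rep_inner_def using trace_inv_cnj[OF G fin s] by (simp cong: sum.cong)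

lemma rep_inner_irr:
  assumes G: "group G" and fin: "finite (carrier G)" and r: "is_irrep G m \<rho>" and s: "is_irrep G k \<sigma>"
  shows "rep_inner G \<rho> \<sigma> = (if same G \<rho> \<sigma> then 1 else 0)"
proof (cases "same G \<rho> \<sigma>")
  case True
  interpret group G by (rule G)
  have N0: "card (carrier G) > 0" using fin by (auto simp: card_gt_0_iff)
  have "rep_inner G \<rho> \<sigma> = (\<Sum>g\<in>carrier G. mat_trace (\<rho> g) * mat_trace (\<sigma> (inv\<^bsub>G\<^esub> g))) / of_nat (card (carrier G))"
    by (rule rep_inner_inv[OF G fin irrep_rep[OF s]])
  also have "(\<Sum>g\<in>carrier G. mat_trace (\<rho> g) * mat_trace (\<sigma> (inv\<^bsub>G\<^esub> g)))
      = (\<Sum>g\<in>carrier G. mat_trace (\<rho> g) * mat_trace (\<rho> (inv\<^bsub>G\<^esub> g)))"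
    using True unfolding same_def by (intro sum.cong) auto
  also have "\<dots> = of_nat (card (carrier G))" by (rule orth_self[OF G fin r])
  finally show ?thesis using True N0 by simp
next
  case False
  then have "(\<Sum>g\<in>carrier G. mat_trace (\<rho> g) * mat_trace (\<sigma> (inv\<^bsub>G\<^esub> g))) = 0"
    using orth_diff[OF G r s] unfolding same_def by blast
  then show ?thesis using False rep_inner_inv[OF G fin irrep_rep[OF s]] by simp
qed

lemma rep_inner_count:
  assumes G: "group G" and fin: "finite (carrier G)" and r: "is_irrep G m \<rho>"
    and ps: "\<forall>p\<in>set ps. is_irrep G (fst p) (snd p)"
    and t: "\<forall>g\<in>carrier G. mat_trace (\<theta> g) = sum_list (map (\<lambda>p. mat_trace (snd p g)) ps)"
  shows "rep_inner G \<rho> \<theta> = of_nat (length (filter (\<lambda>p. same G \<rho> (snd p)) ps))"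
proof -
  have "rep_inner G \<rho> \<theta> = sum_list (map (\<lambda>p. rep_inner G \<rho> (snd p)) ps)" by (rule rep_inner_lin2[OF t])
  also have "\<dots> = sum_list (map (\<lambda>p. if same G \<rho> (snd p) then 1 else 0) ps)"
    using ps by (intro arg_cong[where f=sum_list] map_cong refl) (auto simp: rep_inner_irr[OF G fin r])
  also have "\<dots> = of_nat (length (filter (\<lambda>p. same G \<rho> (snd p)) ps))"
    by (induction ps) auto
  finally show ?thesis .
qed

lemma rep_inner_nat:
  assumes G: "group G" and fin: "finite (carrier G)" and a: "is_rep G m \<alpha>" and b: "is_rep G k \<beta>"
  shows "\<exists>t::nat. rep_inner G \<alpha> \<beta> = of_nat t"
proof -
  obtain ps where ps: "\<forall>p\<in>set ps. is_irrep G (fst p) (snd p)"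
    and pt: "\<forall>g\<in>carrier G. mat_trace (\<alpha> g) = sum_list (map (\<lambda>p. mat_trace (snd p g)) ps)"
    using decomp[OF G fin a] by blast
  obtain qs where qs: "\<forall>p\<in>set qs. is_irrep G (fst p) (snd p)"
    and qt: "\<forall>g\<in>carrier G. mat_trace (\<beta> g) = sum_list (map (\<lambda>p. mat_trace (snd p g)) qs)"
    using decomp[OF G fin b] by blast
  have "rep_inner G \<alpha> \<beta> = sum_list (map (\<lambda>p. rep_inner G (snd p) \<beta>) ps)" by (rule rep_inner_lin1[OF pt])
  also have "\<dots> = sum_list (map (\<lambda>p. of_nat (length (filter (\<lambda>q. same G (snd p) (snd q)) qs))) ps)"
    using ps by (intro arg_cong[where f=sum_list] map_cong refl)
      (metis prod.collapse rep_inner_count[OF G fin _ qs qt])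
  also have "\<dots> = of_nat (sum_list (map (\<lambda>p. length (filter (\<lambda>q. same G (snd p) (snd q)) qs)) ps))"
    by (induction ps) auto
  finally show ?thesis by blast
qed

lemma rep_restrict:
  assumes "is_rep G m \<rho>" and "H \<subseteq> carrier G"
  shows "is_rep (G\<lparr>carrier := H\<rparr>) m \<rho>"
  using assms unfolding is_rep_def by auto

section \<open>Regular representation\<close>

lemma regular_rep:
  assumes G: "group G" and fin: "finite (carrier G)"
  shows "\<exists>R. is_rep G (card (carrier G)) R \<and>
     (\<forall>g\<in>carrier G. mat_trace (R g) = (if g = \<one>\<^bsub>G\<^esub> then of_nat (card (carrier G)) else 0))"
proof -
  interpret group G by (rule G)
  define N where "N = card (carrier G)"
  obtain e where e: "bij_betw e {0..<N} (carrier G)" unfolding N_def using ex_bij_betw_nat_finite[OF fin] by auto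
  have eG: "\<And>i. i < N \<Longrightarrow> e i \<in> carrier G" using e by (auto simp: bij_betw_def)
  have einj: "\<And>i j. i < N \<Longrightarrow> j < N \<Longrightarrow> e i = e j \<Longrightarrow> i = j" using e by (auto simp: bij_betw_def inj_on_def)
  have esurj: "\<And>x. x \<in> carrier G \<Longrightarrow> \<exists>i<N. e i = x" using e by (force simp: bij_betw_def)
  define R where "R g = mat N N (\<lambda>(i,j). if e i = g \<otimes>\<^bsub>G\<^esub> e j then 1 else (0::complex))" for g
  have "is_rep G N R" unfolding is_rep_def
  proof (intro conjI ballI)
    fix g assume "g \<in> carrier G" then show "R g \<in> carrier_mat N N" by (simp add: R_def)
  next
    show "R \<one>\<^bsub>G\<^esub> = 1\<^sub>m N" unfolding R_def by (rule eq_matI) (auto simp: eG einj)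
  next
    fix g h assume g: "g \<in> carrier G" and h: "h \<in> carrier G"
    show "R (g \<otimes>\<^bsub>G\<^esub> h) = R g * R h"
    proof (rule eq_matI)
      fix i j assume "i < dim_row (R g * R h)" "j < dim_col (R g * R h)"
      then have ij: "i < N" "j < N" by (auto simp: R_def)
      obtain l0 where l0: "l0 < N" "e l0 = h \<otimes>\<^bsub>G\<^esub> e j" using esurj[of "h \<otimes>\<^bsub>G\<^esub> e j"] h eG[OF ij(2)] by auto
      have "(R g * R h) $$ (i,j) = (\<Sum>l<N. (if e i = g \<otimes>\<^bsub>G\<^esub> e l then 1 else 0) * (if e l = h \<otimes>\<^bsub>G\<^esub> e j then 1 else (0::complex)))"
        using ij by (auto simp: R_def scalar_prod_def lessThan_atLeast0 intro!: sum.cong)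
      also have "\<dots> = (\<Sum>l<N. if l = l0 then (if e i = g \<otimes>\<^bsub>G\<^esub> e l0 then 1 else 0) else (0::complex))"
        by (rule sum.cong) (use l0 einj in auto)
      also have "\<dots> = (if e i = g \<otimes>\<^bsub>G\<^esub> (h \<otimes>\<^bsub>G\<^esub> e j) then 1 else 0)" using l0 by simp
      also have "\<dots> = R (g \<otimes>\<^bsub>G\<^esub> h) $$ (i,j)" using ij g h eG[OF ij(2)] by (simp add: R_def m_assoc)
      finally show "R (g \<otimes>\<^bsub>G\<^esub> h) $$ (i,j) = (R g * R h) $$ (i,j)" by simp
    qed (auto simp: R_def)
  qed
  moreover have "mat_trace (R g) = (if g = \<one>\<^bsub>G\<^esub> then of_nat N else 0)" if g: "g \<in> carrier G" for g
  proof -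
    have c: "\<And>i. i < N \<Longrightarrow> (e i = g \<otimes>\<^bsub>G\<^esub> e i) \<longleftrightarrow> g = \<one>\<^bsub>G\<^esub>"
    proof -
      fix i assume i: "i < N"
      have "(g \<otimes>\<^bsub>G\<^esub> e i = e i) \<longleftrightarrow> g = \<one>\<^bsub>G\<^esub>" by (rule r_cancel_one) (use g eG[OF i] in auto)
      then show "(e i = g \<otimes>\<^bsub>G\<^esub> e i) \<longleftrightarrow> g = \<one>\<^bsub>G\<^esub>" by auto
    qed
    have "mat_trace (R g) = (\<Sum>i<N. if g = \<one>\<^bsub>G\<^esub> then 1 else 0)"
      unfolding mat_trace_def by (rule sum.cong) (auto simp: R_def c)
    then show ?thesis by simp
  qed
  ultimately show ?thesis unfolding N_def by blast
qed

section \<open>Coset representatives\<close>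

lemma coset_reps_exist:
  assumes G: "group G" and fin: "finite (carrier G)" and H: "subgroup H G"
  shows "\<exists>rs. distinct rs \<and> set rs \<subseteq> carrier G \<and>
      (\<forall>x\<in>carrier G. \<exists>!i. i < length rs \<and> x \<in> (rs ! i) <#\<^bsub>G\<^esub> H)"
proof -
  interpret group G by (rule G)
  define L where "L = (\<lambda>x. x <#\<^bsub>G\<^esub> H) ` carrier G"
  have "finite L" unfolding L_def using fin by simp
  then obtain cs where cs: "set cs = L" "distinct cs" using finite_distinct_list by blast
  define f where "f C = (SOME x. x \<in> carrier G \<and> C = x <#\<^bsub>G\<^esub> H)" for C
  have f: "f C \<in> carrier G \<and> C = f C <#\<^bsub>G\<^esub> H" if "C \<in> L" for C
  proof -
    from that obtain x where "x \<in> carrier G" "C = x <#\<^bsub>G\<^esub> H" unfolding L_def by auto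
    then show ?thesis unfolding f_def by (rule someI[of "\<lambda>y. y \<in> carrier G \<and> C = y <#\<^bsub>G\<^esub> H", OF conjI])
  qed
  define rs where "rs = map f cs"
  have len: "length rs = length cs" unfolding rs_def by simp
  have rsi: "rs ! i <#\<^bsub>G\<^esub> H = cs ! i" if "i < length cs" for i
    using f[of "cs ! i"] that cs(1) unfolding rs_def by auto
  have "distinct rs" unfolding rs_def distinct_map
  proof
    show "distinct cs" by (rule cs(2))
    show "inj_on f (set cs)" unfolding cs(1) by (rule inj_onI) (metis f)
  qed
  moreover have "set rs \<subseteq> carrier G" unfolding rs_def using f cs(1) by auto
  moreover have "\<forall>x\<in>carrier G. \<exists>!i. i < length rs \<and> x \<in> (rs ! i) <#\<^bsub>G\<^esub> H"
  proof
    fix x assume x: "x \<in> carrier G"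
    have xx: "x \<in> x <#\<^bsub>G\<^esub> H" using x subgroup.one_closed[OF H] unfolding l_coset_def by force
    have "x <#\<^bsub>G\<^esub> H \<in> set cs" using x cs(1) unfolding L_def by auto
    then obtain i where i: "i < length cs" "cs ! i = x <#\<^bsub>G\<^esub> H" by (auto simp: in_set_conv_nth)
    show "\<exists>!i. i < length rs \<and> x \<in> (rs ! i) <#\<^bsub>G\<^esub> H"
    proof (rule ex1I[of _ i])
      show "i < length rs \<and> x \<in> rs ! i <#\<^bsub>G\<^esub> H" using i len rsi xx by auto
    next
      fix j assume j: "j < length rs \<and> x \<in> rs ! j <#\<^bsub>G\<^esub> H"
      have jc: "j < length cs" using j len by simp
      have rj: "rs ! j \<in> carrier G" using jc f[of "cs ! j"] cs(1) unfolding rs_def by auto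
      have "rs ! j <#\<^bsub>G\<^esub> H = x <#\<^bsub>G\<^esub> H" using l_repr_independence[OF _ rj H] j by blast
      then have "cs ! j = cs ! i" using rsi[OF jc] i by simp
      then show "j = i" using cs(2) jc i(1) by (simp add: nth_eq_iff_index_eq)
    qed
  qed
  ultimately show ?thesis by blast
qed

lemma coset_reps_bound:
  assumes G: "group G" and fin: "finite (carrier G)" and H: "subgroup H G"
  shows "card (carrier G) \<le> length (coset_reps G H) * card H"
proof -
  interpret group G by (rule G)
  define rs where "rs = coset_reps G H"
  have P: "distinct rs \<and> set rs \<subseteq> carrier G \<and> (\<forall>x\<in>carrier G. \<exists>!i. i < length rs \<and> x \<in> (rs ! i) <#\<^bsub>G\<^esub> H)"
    unfolding rs_def coset_reps_def by (rule someI_ex[OF coset_reps_exist[OF G fin H]])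
  have "carrier G \<subseteq> (\<Union>i<length rs. rs ! i <#\<^bsub>G\<^esub> H)" using P by blast
  then have "card (carrier G) \<le> card (\<Union>i<length rs. rs ! i <#\<^bsub>G\<^esub> H)"
  proof (rule card_mono[rotated])
    have fH: "finite H" using finite_subset[OF subgroup.subset[OF H] fin] .
    show "finite (\<Union>i<length rs. rs ! i <#\<^bsub>G\<^esub> H)"
      by (rule finite_UN_I) (auto simp: l_coset_def intro!: finite_UN_I fH)
  qed
  also have "\<dots> \<le> (\<Sum>i<length rs. card (rs ! i <#\<^bsub>G\<^esub> H))" by (rule card_UN_le) simp
  also have "\<dots> \<le> (\<Sum>i<length rs. card H)"
  proof (rule sum_mono)
    fix i assume "i \<in> {..<length rs}"
    have "rs ! i <#\<^bsub>G\<^esub> H = (\<lambda>h. rs ! i \<otimes>\<^bsub>G\<^esub> h) ` H" unfolding l_coset_def by auto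
    then show "card (rs ! i <#\<^bsub>G\<^esub> H) \<le> card H" by (simp add: card_image_le subgroup.finite_imp_card_positive
       finite_subset[OF subgroup.subset[OF H] fin])
  qed
  finally show ?thesis unfolding rs_def by (simp add: mult.commute)
qed

lemma card_less_sum:
  fixes s :: nat
  shows "card {i. i < s \<and> Q i} = (\<Sum>i<s. if Q i then 1 else 0 :: nat)"
proof (induction s)
  case 0 then show ?case by simp
next
  case (Suc s)
  have "{i. i < Suc s \<and> Q i} = {i. i < s \<and> Q i} \<union> (if Q s then {s} else {})" by (auto simp: less_Suc_eq)
  then show ?case using Suc by (auto simp: card_insert_if)
qed

lemma double_count:
  fixes r s :: nat
  shows "(\<Sum>j<r. card {i. i < s \<and> P j i}) = (\<Sum>i<s. card {j. j < r \<and> P j i})"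
proof -
  have "(\<Sum>j<r. card {i. i < s \<and> P j i}) = (\<Sum>j<r. \<Sum>i<s. if P j i then 1 else 0 :: nat)"
    using card_less_sum[of s "P _"] by simp
  also have "\<dots> = (\<Sum>i<s. \<Sum>j<r. if P j i then 1 else 0 :: nat)" by (rule sum.swap)
  also have "\<dots> = (\<Sum>i<s. card {j. j < r \<and> P j i})"
    using card_less_sum[of r "\<lambda>j. P j _"] by simp
  finally show ?thesis .
qed

lemma sum_list_nth: "sum_list (map f xs) = (\<Sum>i<length xs. f (xs ! i))"
  by (simp add: sum_list_sum_nth lessThan_atLeast0)

theorem lemma9p3:
  fixes G :: "('a,'b) monoid_scheme" and H :: "'a set"
    and \<theta> \<chi> :: "'a \<Rightarrow> complex mat" and n d :: nat
  assumes "group G" and "finite (carrier G)" and "subgroup H G"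
    and "is_rep G n \<theta>"
    and "is_rep (G\<lparr>carrier := H\<rparr>) d \<chi>" and "d > 0"
    and "\<forall>m \<rho>. is_irrep G m \<rho> \<and> rep_inner G \<rho> \<theta> \<noteq> 0
                 \<longrightarrow> rep_inner (G\<lparr>carrier := H\<rparr>) \<rho> \<chi> \<noteq> 0"
  shows "\<exists>m \<rho>. is_irrep G m \<rho> \<and> rep_inner (G\<lparr>carrier := H\<rparr>) \<rho> \<chi> \<noteq> 0 \<and>
           Re (rep_inner G \<rho> \<theta>) \<ge> real n / real (dim_row (ind_rep G H d \<chi> \<one>\<^bsub>G\<^esub>))"
proof -
  note G = assms(1) and fin = assms(2) and HG = assms(3) and th = assms(4) and ch = assms(5)
    and d0 = assms(6) and hyp = assms(7)
  interpret group G by (rule G)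
  define K where "K = G\<lparr>carrier := H\<rparr>"
  have GK: "group K" unfolding K_def by (rule subgroup_imp_group[OF HG])
  have HsG: "H \<subseteq> carrier G" using subgroup.subset[OF HG] .
  have finK: "finite (carrier K)" unfolding K_def using finite_subset[OF HsG fin] by simp
  have cK: "carrier K = H" unfolding K_def by simp
  define N where "N = card (carrier G)"
  define NH where "NH = card H"
  have N0: "N > 0" unfolding N_def using fin by (auto simp: card_gt_0_iff)
  have NH0: "NH > 0" unfolding NH_def using finK cK subgroup.one_closed[OF HG] by (auto simp: card_gt_0_iff)
  define len where "len = length (coset_reps G H)"
  have Ddef: "dim_row (ind_rep G H d \<chi> \<one>\<^bsub>G\<^esub>) = len * d" unfolding ind_rep_def len_def by (simp add: Let_def)
  have bound: "N \<le> len * NH" unfolding N_def len_def NH_def by (rule coset_reps_bound[OF G fin HG])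
  have chK: "is_rep K d \<chi>" using ch unfolding K_def .
  have resK: "\<And>m \<rho>. is_rep G m \<rho> \<Longrightarrow> is_rep K m \<rho>" unfolding K_def using rep_restrict HsG by blast
  have sameK: "rep_inner K \<rho> \<chi> = rep_inner K \<sigma> \<chi>" if "same G \<rho> \<sigma>" for \<rho> \<sigma>
    unfolding rep_inner_def cK using that HsG unfolding same_def by (auto intro!: sum.cong)
  obtain R where R: "is_rep G N R"
    and Rt: "\<forall>g\<in>carrier G. mat_trace (R g) = (if g = \<one>\<^bsub>G\<^esub> then of_nat N else 0)"
    using regular_rep[OF G fin] unfolding N_def by blast
  obtain qs where qs: "\<forall>p\<in>set qs. is_irrep G (fst p) (snd p)"
    and qt: "\<forall>g\<in>carrier G. mat_trace (R g) = sum_list (map (\<lambda>p. mat_trace (snd p g)) qs)"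
    using decomp[OF G fin R] by blast
  define s where "s = length qs"
  define \<psi> where "\<psi> i = snd (qs ! i)" for i
  have \<psi>irr: "is_irrep G (fst (qs ! i)) (\<psi> i)" if "i < s" for i
    using qs that unfolding \<psi>_def s_def by auto
  have tex: "\<exists>t::nat. rep_inner K (\<psi> i) \<chi> = of_nat t" if "i < s" for i
    by (rule rep_inner_nat[OF GK finK resK[OF irrep_rep[OF \<psi>irr[OF that]]] chK])
  define t where "t i = (SOME t::nat. rep_inner K (\<psi> i) \<chi> = of_nat t)" for i
  have tt: "rep_inner K (\<psi> i) \<chi> = of_nat (t i)" if "i < s" for i
    unfolding t_def using someI_ex[OF tex[OF that]] .
  have RK: "rep_inner K R \<chi> = of_nat N * of_nat d / of_nat NH"
  proof -
    have one: "\<one>\<^bsub>G\<^esub> \<in> H" using subgroup.one_closed[OF HG] .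
    have "rep_inner K R \<chi> = (\<Sum>h\<in>H. (if h = \<one>\<^bsub>G\<^esub> then of_nat N * cnj (mat_trace (\<chi> h)) else 0)) / of_nat NH"
      unfolding rep_inner_def cK NH_def using Rt HsG by (auto intro!: sum.cong)
    also have "\<dots> = of_nat N * cnj (mat_trace (\<chi> \<one>\<^bsub>G\<^esub>)) / of_nat NH"
      using finK cK one by simp
    also have "\<chi> \<one>\<^bsub>G\<^esub> = 1\<^sub>m d" using rep_one[OF ch] by simp
    finally show ?thesis by simp
  qed
  have RK2: "rep_inner K R \<chi> = (\<Sum>i<s. of_nat (t i))"
  proof -
    have "rep_inner K R \<chi> = sum_list (map (\<lambda>p. rep_inner K (snd p) \<chi>) qs)"
      by (rule rep_inner_lin1) (use qt HsG cK in auto)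
    also have "\<dots> = (\<Sum>i<s. rep_inner K (\<psi> i) \<chi>)" unfolding sum_list_nth s_def \<psi>_def ..
    also have "\<dots> = (\<Sum>i<s. of_nat (t i))" by (rule sum.cong) (auto simp: tt)
    finally show ?thesis .
  qed
  have Tsum: "(\<Sum>i<s. t i) * NH = N * d"
  proof -
    have "(of_nat ((\<Sum>i<s. t i) * NH) :: complex) = (\<Sum>i<s. of_nat (t i)) * of_nat NH" by simp
    also have "\<dots> = of_nat N * of_nat d" using RK RK2 NH0 by (simp add: field_simps)
    also have "\<dots> = of_nat (N * d)" by simp
    finally show ?thesis by (simp only: of_nat_eq_iff)
  qed
  have count_reg: "card {i. i < s \<and> same G \<rho> (\<psi> i)} = m" if r: "is_irrep G m \<rho>" for m \<rho>
  proof -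
    have "rep_inner G \<rho> R = (\<Sum>g\<in>carrier G. (if g = \<one>\<^bsub>G\<^esub> then mat_trace (\<rho> g) * of_nat N else 0)) / of_nat N"
      unfolding rep_inner_def N_def[symmetric] using Rt by (auto intro!: sum.cong)
    also have "\<dots> = mat_trace (\<rho> \<one>\<^bsub>G\<^esub>)" using fin N0 by simp
    also have "\<dots> = of_nat m" using rep_one[OF irrep_rep[OF r]] by simp
    finally have e1: "rep_inner G \<rho> R = of_nat m" .
    have "rep_inner G \<rho> R = of_nat (length (filter (\<lambda>p. same G \<rho> (snd p)) qs))"
      by (rule rep_inner_count[OF G fin r qs qt])
    then have "length (filter (\<lambda>p. same G \<rho> (snd p)) qs) = m" using e1 by simp
    then show ?thesis unfolding length_filter_conv_card s_def \<psi>_def by simp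
  qed
  show ?thesis
  proof (cases "n = 0")
    case True
    have "N * d \<noteq> 0" using N0 d0 by simp
    have "(\<Sum>i<s. t i) \<noteq> 0"
    proof
      assume "(\<Sum>i<s. t i) = 0"
      then have "N * d = 0" using Tsum by simp
      with \<open>N * d \<noteq> 0\<close> show False by simp
    qed
    then have "\<exists>i\<in>{..<s}. t i \<noteq> 0"
    proof (rule contrapos_np)
      assume "\<not> (\<exists>i\<in>{..<s}. t i \<noteq> 0)"
      then show "(\<Sum>i<s. t i) = 0" by simp
    qed
    then obtain i where i: "i < s" "t i \<noteq> 0" by auto
    have z: "rep_inner G (\<psi> i) \<theta> = 0"
    proof -
      have "\<forall>g\<in>carrier G. mat_trace (\<theta> g) = 0"
      proof
        fix g assume g: "g \<in> carrier G"
        have "dim_row (\<theta> g) = 0" using rep_carrier[OF th g] True by simp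
        then show "mat_trace (\<theta> g) = 0" by (simp add: mat_trace_def)
      qed
      then show ?thesis unfolding rep_inner_def by simp
    qed
    show ?thesis
    proof (intro exI conjI)
      show "is_irrep G (fst (qs ! i)) (\<psi> i)" by (rule \<psi>irr[OF i(1)])
      show "rep_inner (G\<lparr>carrier := H\<rparr>) (\<psi> i) \<chi> \<noteq> 0" using tt[OF i(1)] i(2) unfolding K_def by simp
      show "real n / real (dim_row (ind_rep G H d \<chi> \<one>\<^bsub>G\<^esub>)) \<le> Re (rep_inner G (\<psi> i) \<theta>)" using z True by simp
    qed
  next
    case False
    obtain ps where ps: "\<forall>p\<in>set ps. is_irrep G (fst p) (snd p)" and psn: "sum_list (map fst ps) = n"
      and pt: "\<forall>g\<in>carrier G. mat_trace (\<theta> g) = sum_list (map (\<lambda>p. mat_trace (snd p g)) ps)"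
      using decomp[OF G fin th] by blast
    define r where "r = length ps"
    define \<rho> where "\<rho> j = snd (ps ! j)" for j
    define mm where "mm j = fst (ps ! j)" for j
    have \<rho>irr: "is_irrep G (mm j) (\<rho> j)" if "j < r" for j
      using ps that unfolding \<rho>_def mm_def r_def by auto
    have nsum: "n = (\<Sum>j<r. mm j)" using psn unfolding sum_list_nth r_def mm_def by simp
    define \<mu> where "\<mu> j = card {j'. j' < r \<and> same G (\<rho> j) (\<rho> j')}" for j
    have inner_mu: "rep_inner G (\<rho> j) \<theta> = of_nat (\<mu> j)" if j: "j < r" for j
      using rep_inner_count[OF G fin \<rho>irr[OF j] ps pt]
      unfolding length_filter_conv_card \<mu>_def r_def \<rho>_def by simp
    have mu_pos: "\<mu> j \<ge> 1" if j: "j < r" for j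
    proof -
      have "j \<in> {j'. j' < r \<and> same G (\<rho> j) (\<rho> j')}" using j by (simp add: same_refl)
      moreover have "finite {j'. j' < r \<and> same G (\<rho> j) (\<rho> j')}" by simp
      ultimately have "card {j'. j' < r \<and> same G (\<rho> j) (\<rho> j')} > 0" by (auto simp: card_gt_0_iff)
      then show ?thesis unfolding \<mu>_def by simp
    qed
    have hypj: "rep_inner K (\<rho> j) \<chi> \<noteq> 0" if j: "j < r" for j
    proof -
      have "rep_inner G (\<rho> j) \<theta> \<noteq> 0" using inner_mu[OF j] mu_pos[OF j] by simp
      then show ?thesis using hyp \<rho>irr[OF j] unfolding K_def by blast
    qed
    have r0: "r > 0" using False nsum by (cases r) auto
    have mu_le: "\<forall>y. y < r \<longrightarrow> \<mu> y < Suc r"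
    proof (intro allI impI)
      fix y assume "y < r"
      have "\<mu> y \<le> card {..<r}" unfolding \<mu>_def by (rule card_mono) auto
      then show "\<mu> y < Suc r" by simp
    qed
    obtain j0 where j0: "j0 < r" and j0max: "\<And>j. j < r \<Longrightarrow> \<mu> j \<le> \<mu> j0"
      using ex_has_greatest_nat[of "\<lambda>j. j < r" 0 \<mu> "Suc r"] r0 mu_le by blast
    define S where "S i = {j. j < r \<and> same G (\<rho> j) (\<psi> i)}" for i
    have mmj: "mm j = card {i. i < s \<and> same G (\<rho> j) (\<psi> i)}" if j: "j < r" for j
      using count_reg[OF \<rho>irr[OF j]] by simp
    have "n = (\<Sum>j<r. card {i. i < s \<and> same G (\<rho> j) (\<psi> i)})" unfolding nsum by (rule sum.cong) (auto simp: mmj)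
    also have "\<dots> = (\<Sum>i<s. card (S i))" unfolding S_def by (rule double_count)
    also have "\<dots> \<le> (\<Sum>i<s. \<mu> j0 * t i)"
    proof (rule sum_mono)
      fix i assume i: "i \<in> {..<s}"
      show "card (S i) \<le> \<mu> j0 * t i"
      proof (cases "S i = {}")
        case True then show ?thesis by simp
      next
        case False
        then obtain j where j: "j < r" "same G (\<rho> j) (\<psi> i)" unfolding S_def by auto
        have "S i = {j'. j' < r \<and> same G (\<rho> j) (\<rho> j')}"
          unfolding S_def using j(2) unfolding same_def by auto
        then have cS: "card (S i) = \<mu> j" unfolding \<mu>_def by simp
        have "rep_inner K (\<psi> i) \<chi> = rep_inner K (\<rho> j) \<chi>" by (rule sameK[OF same_sym[OF j(2)]])
        then have "t i \<noteq> 0" using tt[of i] i hypj[OF j(1)] by auto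
        then have "\<mu> j \<le> \<mu> j0 * t i" using j0max[OF j(1)] by (simp add: le_trans)
        then show ?thesis using cS by simp
      qed
    qed
    also have "\<dots> = \<mu> j0 * (\<Sum>i<s. t i)" by (simp add: sum_distrib_left)
    finally have nle: "n \<le> \<mu> j0 * (\<Sum>i<s. t i)" .
    have "n * NH \<le> \<mu> j0 * (\<Sum>i<s. t i) * NH" using nle by simp
    also have "\<dots> = \<mu> j0 * (N * d)" using Tsum by (simp add: mult.assoc)
    also have "\<dots> \<le> \<mu> j0 * (len * NH * d)" using bound by simp
    finally have "n * NH \<le> (\<mu> j0 * (len * d)) * NH" by (simp add: ac_simps)
    then have nD: "n \<le> \<mu> j0 * (len * d)" using NH0 by simp
    have "len * NH > 0" using bound N0 by linarith
    then have D0: "len * d > 0" using d0 by simp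
    show ?thesis
    proof (intro exI conjI)
      show "is_irrep G (mm j0) (\<rho> j0)" by (rule \<rho>irr[OF j0])
      show "rep_inner (G\<lparr>carrier := H\<rparr>) (\<rho> j0) \<chi> \<noteq> 0" using hypj[OF j0] unfolding K_def .
      have "real n \<le> real (\<mu> j0 * (len * d))" using nD by (simp only: of_nat_le_iff)
      then have "real n \<le> real (\<mu> j0) * real (len * d)" by simp
      then have "real n / real (len * d) \<le> real (\<mu> j0)" using D0 by (simp add: divide_le_eq)
      then show "real n / real (dim_row (ind_rep G H d \<chi> \<one>\<^bsub>G\<^esub>)) \<le> Re (rep_inner G (\<rho> j0) \<theta>)"
        unfolding Ddef inner_mu[OF j0] by simp
    qed
  qed
qed

end
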